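(* Let $\mathbb{M}$ be a weight sequence with sequence of quotients $\mathbf{m}$. The following are equivalent: (i) $\mathbb{M}$ is strongly regular; (ii) there exists $k\in\mathbb{N}$, $k\ge2$, such that $1<\liminf_{p\to\infty}\frac{m_{kp}}{m_p}\le\limsup_{p\to\infty}\frac{m_{kp}}{m_p}<\infty$; (iii) $\alpha(\mathbf{m})<\infty$ and $\beta(\mathbf{m})>0$; (iv) $\mathbf{m}$ is O-regularly varying and $\beta(\mathbf{m})>0$; (v) $0<\liminf_{t\to\infty}\frac{\nu_{\mathbf{m}}(t)}{\omega_{\mathbb{M}}(t)}\le\limsup_{t\to\infty}\frac{\nu_{\mathbf{m}}(t)}{\omega_{\mathbb{M}}(t)}<\infty$; (vi) $\alpha(\nu_{\mathbf{m}})<\infty$ and $\beta(\nu_{\mathbf{m}})>0$; (vii) $\alpha(\omega_{\mathbb{M}})<\infty$ and $\beta(\omega_{\mathbb{M}})>0$. In this case, $\alpha(\omega_{\mathbb{M}})=\alpha(\nu_{\mathbf{m}})=1/\beta(\mathbf{m})$ and $\beta(\omega_{\mathbb{M}})=\beta(\nu_{\mathbf{m}})=1/\alpha(\mathbf{m})$.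
   Context: A weight sequence is $\mathbb{M}=(M_p)_{p\in\mathbb{N}_0}$ of positive reals with $M_0=1$, $M_p^2\le M_{p-1}M_{p+1}$ ($p\ge1$) and $M_p^{1/p}\to\infty$; $m_p=M_{p+1}/M_p$. $\mathbb{M}$ is strongly regular if it is logarithmically convex, has moderate growth (there is $A>0$ with $M_{p+q}\le A^{p+q}M_pM_q$ for all $p,q\in\mathbb{N}_0$) and satisfies strong nonquasianalyticity (there is $B>0$ with $\sum_{q\ge p}\frac{M_q}{(q+1)M_{q+1}}\le B\frac{M_p}{M_{p+1}}$ for all $p\in\mathbb{N}_0$). $\omega_{\mathbb{M}}(t):=\sup_{p\in\mathbb{N}_0}\log(t^p/M_p)$ for $t>0$, $\omega_{\mathbb{M}}(0)=0$; $\nu_{\mathbf{m}}(t):=\#\{j\in\mathbb{N}_0:m_j\le t\}$ for $t>0$. For a positive measurable $f$ on $[A,\infty)$: $\alpha(f):=\inf\{\alpha:\exists C_\alpha>0\ \forall\Lambda>1,\ \limsup_{x\to\infty}\sup_{\lambda\in[1,\Lambda]}\frac{f(\lambda x)}{\lambda^{\alpha}f(x)}\le C_\alpha\}$ and $\beta(f):=\sup\{\beta:\exists D_\beta>0\ \forall\Lambda>1,\ \liminf_{x\to\infty}\inf_{\lambda\in[1,\Lambda]}\frac{f(\lambda x)}{\lambda^{\beta}f(x)}\ge D_\beta\}$; for $\omega_{\mathbb{M}}$, $\nu_{\mathbf{m}}$ these are computed on any interval $[A,\infty)$ where the function is positive. For the sequence $\mathbf{m}$, $\alpha(\mathbf{m}),\beta(\mathbf{m})$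 are these indices of the step function $f(x)=m_{\lfloor x\rfloor-1}$, $x\ge1$, and $\mathbf{m}$ is O-regularly varying if $\limsup_{p\to\infty}m_{\lfloor\lambda p\rfloor}/m_p<\infty$ for every $\lambda\in(0,\infty)$. Conventions $1/0=\infty$, $1/\infty=0$. *)

theory Defs
  imports "HOL-Analysis.Analysis" "HOL-Library.Extended_Real" "HOL-Library.Liminf_Limsup"
begin

definition weight_seq :: "(nat \<Rightarrow> real) \<Rightarrow> bool" where
  "weight_seq M \<longleftrightarrow> M 0 = 1 \<and> (\<forall>p. 0 < M p)
     \<and> (\<forall>p\<ge>1. (M p)\<^sup>2 \<le> M (p - 1) * M (p + 1))
     \<and> filterlim (\<lambda>p. root p (M p)) at_top sequentially"

definition quot :: "(nat \<Rightarrow> real) \<Rightarrow> nat \<Rightarrow> real" where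
  "quot M p = M (Suc p) / M p"

definition log_convex :: "(nat \<Rightarrow> real) \<Rightarrow> bool" where
  "log_convex M \<longleftrightarrow> (\<forall>p\<ge>1. (M p)\<^sup>2 \<le> M (p - 1) * M (p + 1))"

definition moderate_growth :: "(nat \<Rightarrow> real) \<Rightarrow> bool" where
  "moderate_growth M \<longleftrightarrow> (\<exists>A>0. \<forall>p q. M (p + q) \<le> A ^ (p + q) * M p * M q)"

definition strongly_nonquasianalytic :: "(nat \<Rightarrow> real) \<Rightarrow> bool" where
  "strongly_nonquasianalytic M \<longleftrightarrow>
     summable (\<lambda>q. M q / ((real q + 1) * M (Suc q)))
     \<and> (\<exists>B>0. \<forall>p. (\<Sum>j. M (p + j) / ((real (p + j) + 1) * M (Suc (p + j))))
                     \<le> B * (M p / M (Suc p)))"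

definition strongly_regular :: "(nat \<Rightarrow> real) \<Rightarrow> bool" where
  "strongly_regular M \<longleftrightarrow> log_convex M \<and> moderate_growth M \<and> strongly_nonquasianalytic M"

definition omegaM :: "(nat \<Rightarrow> real) \<Rightarrow> real \<Rightarrow> real" where
  "omegaM M t = (if t = 0 then 0 else (SUP p. ln (t ^ p / M p)))"

definition nu_m :: "(nat \<Rightarrow> real) \<Rightarrow> real \<Rightarrow> real" where
  "nu_m m t = real (card {j. m j \<le> t})"

definition alpha_idx :: "(real \<Rightarrow> real) \<Rightarrow> ereal" where
  "alpha_idx f = Inf {ereal a | a. \<exists>C>0. \<forall>\<Lambda>>1.
      Limsup at_top (\<lambda>x. SUP l\<in>{1..\<Lambda>}. ereal (f (l * x) / (l powr a * f x))) \<le> ereal C}"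

definition beta_idx :: "(real \<Rightarrow> real) \<Rightarrow> ereal" where
  "beta_idx f = Sup {ereal b | b. \<exists>D>0. \<forall>\<Lambda>>1.
      Liminf at_top (\<lambda>x. INF l\<in>{1..\<Lambda>}. ereal (f (l * x) / (l powr b * f x))) \<ge> ereal D}"

definition seq_step :: "(nat \<Rightarrow> real) \<Rightarrow> real \<Rightarrow> real" where
  "seq_step m x = m (nat \<lfloor>x\<rfloor> - 1)"

definition O_reg_var :: "(nat \<Rightarrow> real) \<Rightarrow> bool" where
  "O_reg_var m \<longleftrightarrow> (\<forall>l>0. Limsup sequentially (\<lambda>p. ereal (m (nat \<lfloor>l * real p\<rfloor>) / m p)) < \<infinity>)"

end

theory Submission
  imports Defs
begin


definition Aset :: "(real \<Rightarrow> real) \<Rightarrow> real set" where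
  "Aset f = {a. \<exists>C>0. \<exists>x0>0. \<forall>x\<ge>x0. \<forall>l\<ge>1. f (l*x) \<le> C * l powr a * f x}"

definition Bset :: "(real \<Rightarrow> real) \<Rightarrow> real set" where
  "Bset f = {b. \<exists>D>0. \<exists>x0>0. \<forall>x\<ge>x0. \<forall>l\<ge>1. f (l*x) \<ge> D * l powr b * f x}"

lemma iter_upper:
  fixes f :: "real \<Rightarrow> real"
  assumes L: "L > 1" and x0: "x0 > 0"
    and h1: "\<forall>x\<ge>x0. \<forall>l. 1 \<le> l \<and> l \<le> L \<longrightarrow> f (l*x) \<le> K * l powr a * f x"
    and h2: "\<forall>y\<ge>x0. f (L*y) \<le> L powr a * f y"
  shows "\<forall>x\<ge>x0. \<forall>l\<ge>1. f (l*x) \<le> K * l powr a * f x"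
proof -
  have P: "\<forall>x\<ge>x0. \<forall>l. 1 \<le> l \<and> l \<le> L^(Suc n) \<longrightarrow> f (l*x) \<le> K * l powr a * f x" for n
  proof (induction n)
    case 0
    then show ?case using h1 by simp
  next
    case (Suc n)
    show ?case
    proof (intro allI impI)
      fix x l assume x: "x \<ge> x0" and l: "1 \<le> l \<and> l \<le> L ^ Suc (Suc n)"
      show "f (l*x) \<le> K * l powr a * f x"
      proof (cases "l \<le> L ^ Suc n")
        case True
        then show ?thesis using Suc x l by blast
      next
        case False
        have "L ^ Suc n \<ge> L" using L by (metis less_imp_le one_le_power power_Suc mult_le_cancel_left1 order.strict_trans less_one not_less zero_less_one)
        hence lL: "l > L" using False by linarith
        define l' where "l' = l / L"
        have l'1: "1 \<le> l'" using lL L by (simp add: l'_def)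
        have l'2: "l' \<le> L ^ Suc n" using l L by (simp add: l'_def field_simps)
        have y: "l' * x \<ge> x0" using l'1 x x0 by (metis mult_le_cancel_right1 order.trans less_le_not_le order_less_le_trans)
        have "f (l*x) = f (L * (l' * x))" using L by (simp add: l'_def)
        also have "\<dots> \<le> L powr a * f (l' * x)" using h2 y by blast
        also have "\<dots> \<le> L powr a * (K * l' powr a * f x)"
          using Suc x l'1 l'2 by (intro mult_left_mono) auto
        also have "\<dots> = K * (L * l') powr a * f x" using L l'1 by (simp add: powr_mult)
        also have "L * l' = l" using L by (simp add: l'_def)
        finally show ?thesis .
      qed
    qed
  qed
  show ?thesis
  proof (intro allI impI)
    fix x l :: real assume x: "x \<ge> x0" and l: "l \<ge> 1"
    obtain n where "l < L ^ n" using real_arch_pow[OF L] by blast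
    hence "l \<le> L ^ Suc n" using L by (smt (verit) one_le_power power_Suc mult_le_cancel_right1)
    thus "f (l*x) \<le> K * l powr a * f x" using P x l by blast
  qed
qed

lemma iter_lower:
  fixes f :: "real \<Rightarrow> real"
  assumes L: "L > 1" and x0: "x0 > 0"
    and h1: "\<forall>x\<ge>x0. \<forall>l. 1 \<le> l \<and> l \<le> L \<longrightarrow> f (l*x) \<ge> K * l powr a * f x"
    and h2: "\<forall>y\<ge>x0. f (L*y) \<ge> L powr a * f y"
  shows "\<forall>x\<ge>x0. \<forall>l\<ge>1. f (l*x) \<ge> K * l powr a * f x"
proof -
  have P: "\<forall>x\<ge>x0. \<forall>l. 1 \<le> l \<and> l \<le> L^(Suc n) \<longrightarrow> f (l*x) \<ge> K * l powr a * f x" for n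
  proof (induction n)
    case 0
    then show ?case using h1 by simp
  next
    case (Suc n)
    show ?case
    proof (intro allI impI)
      fix x l assume x: "x \<ge> x0" and l: "1 \<le> l \<and> l \<le> L ^ Suc (Suc n)"
      show "f (l*x) \<ge> K * l powr a * f x"
      proof (cases "l \<le> L ^ Suc n")
        case True
        then show ?thesis using Suc x l by blast
      next
        case False
        have "L ^ Suc n \<ge> L" using L by (metis less_imp_le one_le_power power_Suc mult_le_cancel_left1 order.strict_trans less_one not_less zero_less_one)
        hence lL: "l > L" using False by linarith
        define l' where "l' = l / L"
        have l'1: "1 \<le> l'" using lL L by (simp add: l'_def)
        have l'2: "l' \<le> L ^ Suc n" using l L by (simp add: l'_def field_simps)
        have y: "l' * x \<ge> x0" using l'1 x x0 by (metis mult_le_cancel_right1 order.trans less_le_not_le order_less_le_trans)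
        have "K * l powr a * f x = K * (L * l') powr a * f x" using L by (simp add: l'_def)
        also have "\<dots> = L powr a * (K * l' powr a * f x)" using L l'1 by (simp add: powr_mult)
        also have "\<dots> \<le> L powr a * f (l' * x)"
          using Suc x l'1 l'2 by (intro mult_left_mono) auto
        also have "\<dots> \<le> f (L * (l' * x))" using h2 y by blast
        also have "L * (l' * x) = l * x" using L by (simp add: l'_def)
        finally show ?thesis .
      qed
    qed
  qed
  show ?thesis
  proof (intro allI impI)
    fix x l :: real assume x: "x \<ge> x0" and l: "l \<ge> 1"
    obtain n where "l < L ^ n" using real_arch_pow[OF L] by blast
    hence "l \<le> L ^ Suc n" using L by (smt (verit) one_le_power power_Suc mult_le_cancel_right1)
    thus "f (l*x) \<ge> K * l powr a * f x" using P x l by blast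
  qed
qed

lemma Aset_in_S:
  fixes f :: "real \<Rightarrow> real"
  assumes pos: "\<forall>x\<ge>x1. f x > 0" and a: "a \<in> Aset f"
  shows "\<exists>C>0. \<forall>\<Lambda>>1. Limsup at_top (\<lambda>x. SUP l\<in>{1..\<Lambda>}. ereal (f (l * x) / (l powr a * f x))) \<le> ereal C"
proof -
  obtain C x0 where C: "C > 0" "x0 > 0" "\<forall>x\<ge>x0. \<forall>l\<ge>1. f (l*x) \<le> C * l powr a * f x"
    using a unfolding Aset_def by blast
  have "Limsup at_top (\<lambda>x. SUP l\<in>{1..\<Lambda>}. ereal (f (l * x) / (l powr a * f x))) \<le> ereal C" for \<Lambda>
  proof (rule Limsup_bounded)
    show "\<forall>\<^sub>F x in at_top. (SUP l\<in>{1..\<Lambda>}. ereal (f (l * x) / (l powr a * f x))) \<le> ereal C"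
      unfolding eventually_at_top_linorder
    proof (intro exI[of _ "max x0 x1"] allI impI)
      fix x assume x: "x \<ge> max x0 x1"
      show "(SUP l\<in>{1..\<Lambda>}. ereal (f (l * x) / (l powr a * f x))) \<le> ereal C"
      proof (rule SUP_least)
        fix l assume l: "l \<in> {1..\<Lambda>}"
        have fx: "f x > 0" using pos x by auto
        have lp: "l powr a > 0" using l by auto
        have "f (l*x) \<le> C * l powr a * f x" using C x l by auto
        hence "f (l * x) / (l powr a * f x) \<le> C" using fx lp by (simp add: divide_le_eq mult.commute mult.left_commute)
        thus "ereal (f (l * x) / (l powr a * f x)) \<le> ereal C" by simp
      qed
    qed
  qed
  thus ?thesis using C by blast
qed

lemma Bset_in_S:
  fixes f :: "real \<Rightarrow> real"
  assumes pos: "\<forall>x\<ge>x1. f x > 0" and b: "b \<in> Bset f"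
  shows "\<exists>D>0. \<forall>\<Lambda>>1. Liminf at_top (\<lambda>x. INF l\<in>{1..\<Lambda>}. ereal (f (l * x) / (l powr b * f x))) \<ge> ereal D"
proof -
  obtain D x0 where D: "D > 0" "x0 > 0" "\<forall>x\<ge>x0. \<forall>l\<ge>1. f (l*x) \<ge> D * l powr b * f x"
    using b unfolding Bset_def by blast
  have "Liminf at_top (\<lambda>x. INF l\<in>{1..\<Lambda>}. ereal (f (l * x) / (l powr b * f x))) \<ge> ereal D" for \<Lambda>
  proof (rule Liminf_bounded)
    show "\<forall>\<^sub>F x in at_top. (INF l\<in>{1..\<Lambda>}. ereal (f (l * x) / (l powr b * f x))) \<ge> ereal D"
      unfolding eventually_at_top_linorder
    proof (intro exI[of _ "max x0 x1"] allI impI)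
      fix x assume x: "x \<ge> max x0 x1"
      show "(INF l\<in>{1..\<Lambda>}. ereal (f (l * x) / (l powr b * f x))) \<ge> ereal D"
      proof (rule INF_greatest)
        fix l assume l: "l \<in> {1..\<Lambda>}"
        have fx: "f x > 0" using pos x by auto
        have lp: "l powr b > 0" using l by auto
        have "f (l*x) \<ge> D * l powr b * f x" using D x l by auto
        hence "f (l * x) / (l powr b * f x) \<ge> D" using fx lp by (simp add: le_divide_eq mult.commute mult.left_commute)
        thus "ereal (f (l * x) / (l powr b * f x)) \<ge> ereal D" by simp
      qed
    qed
  qed
  thus ?thesis using D by blast
qed

lemma S_in_Aset:
  fixes f :: "real \<Rightarrow> real"
  assumes pos: "\<forall>x\<ge>x1. f x > 0"
    and C: "C > 0" "\<forall>\<Lambda>>1. Limsup at_top (\<lambda>x. SUP l\<in>{1..\<Lambda>}. ereal (f (l * x) / (l powr a * f x))) \<le> ereal C"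
    and aa: "a' > a"
  shows "a' \<in> Aset f"
proof -
  define K where "K = max (2*C) 1"
  define L where "L = K powr (1/(a'-a)) + 1"
  have K1: "K \<ge> 1" by (simp add: K_def)
  have L1: "L > 1" using K1 by (simp add: L_def)
  have "K = (K powr (1/(a'-a))) powr (a'-a)" using K1 aa by (simp add: powr_powr)
  also have "\<dots> \<le> L powr (a'-a)" using aa K1 by (intro powr_mono2) (auto simp: L_def)
  finally have KL: "K \<le> L powr (a'-a)" .
  have "Limsup at_top (\<lambda>x. SUP l\<in>{1..L}. ereal (f (l * x) / (l powr a * f x))) < ereal (2*C)"
    using C(1) by (intro le_less_trans[OF C(2)[rule_format, OF L1]]) simp
  from Limsup_lessD[OF this] obtain x2 where x2: "\<forall>x\<ge>x2. (SUP l\<in>{1..L}. ereal (f (l * x) / (l powr a * f x))) < ereal (2*C)"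
    unfolding eventually_at_top_linorder by blast
  define x0 where "x0 = max (max x1 x2) 1"
  have x0: "x0 > 0" by (simp add: x0_def)
  have loc: "f (l*x) \<le> K * l powr a * f x" if x: "x \<ge> x0" and l: "1 \<le> l" "l \<le> L" for x l
  proof -
    have fx: "f x > 0" using pos x by (auto simp: x0_def)
    have lp: "l powr a > 0" using l by auto
    have "ereal (f (l * x) / (l powr a * f x)) \<le> (SUP l\<in>{1..L}. ereal (f (l * x) / (l powr a * f x)))"
      using l by (intro SUP_upper) auto
    also have "\<dots> < ereal (2*C)" using x2 x by (auto simp: x0_def)
    finally have "f (l * x) / (l powr a * f x) < 2*C" by simp
    hence "f (l*x) < 2*C * (l powr a * f x)" using fx lp by (simp add: divide_less_eq)
    also have "\<dots> \<le> K * (l powr a * f x)" using fx lp by (intro mult_right_mono) (auto simp: K_def)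
    finally show ?thesis by simp
  qed
  have h1: "\<forall>x\<ge>x0. \<forall>l. 1 \<le> l \<and> l \<le> L \<longrightarrow> f (l*x) \<le> K * l powr a' * f x"
  proof (intro allI impI)
    fix x l assume x: "x \<ge> x0" and l: "1 \<le> l \<and> l \<le> L"
    have fx: "f x > 0" using pos x by (auto simp: x0_def)
    have "f (l*x) \<le> K * l powr a * f x" using loc x l by auto
    also have "\<dots> \<le> K * l powr a' * f x" using l aa fx K1 by (intro mult_right_mono mult_left_mono powr_mono) auto
    finally show "f (l*x) \<le> K * l powr a' * f x" .
  qed
  have h2: "\<forall>y\<ge>x0. f (L*y) \<le> L powr a' * f y"
  proof (intro allI impI)
    fix y assume y: "y \<ge> x0"
    have fy: "f y > 0" using pos y by (auto simp: x0_def)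
    have "f (L*y) \<le> K * L powr a * f y" using loc y L1 by auto
    also have "\<dots> \<le> L powr (a'-a) * L powr a * f y" using KL fy L1 by (intro mult_right_mono) auto
    also have "\<dots> = L powr a' * f y" using L1 by (simp add: powr_add[symmetric])
    finally show "f (L*y) \<le> L powr a' * f y" .
  qed
  have "\<forall>x\<ge>x0. \<forall>l\<ge>1. f (l*x) \<le> K * l powr a' * f x" by (rule iter_upper[OF L1 x0 h1 h2])
  thus ?thesis unfolding Aset_def using x0 K1 by (intro CollectI exI[of _ K]) auto
qed

lemma S_in_Bset:
  fixes f :: "real \<Rightarrow> real"
  assumes pos: "\<forall>x\<ge>x1. f x > 0"
    and D: "D > 0" "\<forall>\<Lambda>>1. Liminf at_top (\<lambda>x. INF l\<in>{1..\<Lambda>}. ereal (f (l * x) / (l powr b * f x))) \<ge> ereal D"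
    and bb: "b' < b"
  shows "b' \<in> Bset f"
proof -
  define K where "K = min (D/2) 1"
  define L where "L = (1/K) powr (1/(b-b')) + 1"
  have K1: "K \<le> 1" "K > 0" using D by (auto simp: K_def)
  have L1: "L > 1" using K1 by (simp add: L_def)
  have "1/K = ((1/K) powr (1/(b-b'))) powr (b-b')" using K1 bb by (simp add: powr_powr)
  also have "\<dots> \<le> L powr (b-b')" using bb K1 by (intro powr_mono2) (auto simp: L_def)
  finally have KL: "1 \<le> K * L powr (b-b')" using K1 by (simp add: field_simps)
  have "ereal (D/2) < Liminf at_top (\<lambda>x. INF l\<in>{1..L}. ereal (f (l * x) / (l powr b * f x)))"
    using D(1) by (intro less_le_trans[OF _ D(2)[rule_format, OF L1]]) simp
  from less_LiminfD[OF this] obtain x2 where x2: "\<forall>x\<ge>x2. (INF l\<in>{1..L}. ereal (f (l * x) / (l powr b * f x))) > ereal (D/2)"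
    unfolding eventually_at_top_linorder by blast
  define x0 where "x0 = max (max x1 x2) 1"
  have x0: "x0 > 0" by (simp add: x0_def)
  have loc: "f (l*x) \<ge> K * l powr b * f x" if x: "x \<ge> x0" and l: "1 \<le> l" "l \<le> L" for x l
  proof -
    have fx: "f x > 0" using pos x by (auto simp: x0_def)
    have lp: "l powr b > 0" using l by auto
    have "ereal (D/2) < (INF l\<in>{1..L}. ereal (f (l * x) / (l powr b * f x)))" using x2 x by (auto simp: x0_def)
    also have "\<dots> \<le> ereal (f (l * x) / (l powr b * f x))"
      using l by (intro INF_lower) auto
    finally have "D/2 < f (l * x) / (l powr b * f x)" by simp
    hence "D/2 * (l powr b * f x) < f (l*x)" using fx lp by (simp add: less_divide_eq)
    moreover have "K * (l powr b * f x) \<le> D/2 * (l powr b * f x)" using fx lp by (intro mult_right_mono) (auto simp: K_def)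
    ultimately show ?thesis by simp
  qed
  have h1: "\<forall>x\<ge>x0. \<forall>l. 1 \<le> l \<and> l \<le> L \<longrightarrow> f (l*x) \<ge> K * l powr b' * f x"
  proof (intro allI impI)
    fix x l assume x: "x \<ge> x0" and l: "1 \<le> l \<and> l \<le> L"
    have fx: "f x > 0" using pos x by (auto simp: x0_def)
    have "K * l powr b' * f x \<le> K * l powr b * f x" using l bb fx K1 by (intro mult_right_mono mult_left_mono powr_mono) auto
    also have "\<dots> \<le> f (l*x)" using loc x l by auto
    finally show "f (l*x) \<ge> K * l powr b' * f x" .
  qed
  have h2: "\<forall>y\<ge>x0. f (L*y) \<ge> L powr b' * f y"
  proof (intro allI impI)
    fix y assume y: "y \<ge> x0"
    have fy: "f y > 0" using pos y by (auto simp: x0_def)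
    have "L powr b' * f y \<le> K * L powr (b-b') * (L powr b' * f y)" using mult_right_mono[OF KL, of "L powr b' * f y"] fy by simp
    also have "\<dots> = K * L powr b * f y" using L1 by (simp add: powr_add[symmetric])
    also have "\<dots> \<le> f (L*y)" using loc y L1 by auto
    finally show "f (L*y) \<ge> L powr b' * f y" .
  qed
  have "\<forall>x\<ge>x0. \<forall>l\<ge>1. f (l*x) \<ge> K * l powr b' * f x" by (rule iter_lower[OF L1 x0 h1 h2])
  thus ?thesis unfolding Bset_def using x0 K1 by (intro CollectI exI[of _ K]) auto
qed

lemma alpha_idx_Aset:
  fixes f :: "real \<Rightarrow> real"
  assumes pos: "\<forall>x\<ge>x1. f x > 0"
  shows "alpha_idx f = Inf (ereal ` Aset f)"
proof -
  let ?S = "{ereal a | a. \<exists>C>0. \<forall>\<Lambda>>1.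
      Limsup at_top (\<lambda>x. SUP l\<in>{1..\<Lambda>}. ereal (f (l * x) / (l powr a * f x))) \<le> ereal C}"
  have "alpha_idx f = Inf ?S" unfolding alpha_idx_def by simp
  also have "\<dots> = Inf (ereal ` Aset f)"
  proof (rule antisym)
    show "Inf ?S \<le> Inf (ereal ` Aset f)"
      by (rule Inf_superset_mono) (use Aset_in_S[OF pos] in blast)
    show "Inf (ereal ` Aset f) \<le> Inf ?S"
    proof (rule Inf_greatest)
      fix z assume "z \<in> ?S"
      then obtain a C where z: "z = ereal a" and C: "C > 0" "\<forall>\<Lambda>>1.
        Limsup at_top (\<lambda>x. SUP l\<in>{1..\<Lambda>}. ereal (f (l * x) / (l powr a * f x))) \<le> ereal C" by blast
      show "Inf (ereal ` Aset f) \<le> z" unfolding z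
      proof (rule dense_ge)
        fix y assume y: "ereal a < y"
        show "Inf (ereal ` Aset f) \<le> y"
        proof (cases y)
          case (real r)
          then have "r \<in> Aset f" using S_in_Aset[OF pos C] y by simp
          then show ?thesis using real by (simp add: Inf_lower)
        qed (use y in auto)
      qed
    qed
  qed
  finally show ?thesis .
qed

lemma beta_idx_Bset:
  fixes f :: "real \<Rightarrow> real"
  assumes pos: "\<forall>x\<ge>x1. f x > 0"
  shows "beta_idx f = Sup (ereal ` Bset f)"
proof -
  let ?S = "{ereal b | b. \<exists>D>0. \<forall>\<Lambda>>1.
      Liminf at_top (\<lambda>x. INF l\<in>{1..\<Lambda>}. ereal (f (l * x) / (l powr b * f x))) \<ge> ereal D}"
  have "beta_idx f = Sup ?S" unfolding beta_idx_def by simp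
  also have "\<dots> = Sup (ereal ` Bset f)"
  proof (rule antisym)
    show "Sup (ereal ` Bset f) \<le> Sup ?S"
      by (rule Sup_subset_mono) (use Bset_in_S[OF pos] in blast)
    show "Sup ?S \<le> Sup (ereal ` Bset f)"
    proof (rule Sup_least)
      fix z assume "z \<in> ?S"
      then obtain b D where z: "z = ereal b" and D: "D > 0" "\<forall>\<Lambda>>1.
        Liminf at_top (\<lambda>x. INF l\<in>{1..\<Lambda>}. ereal (f (l * x) / (l powr b * f x))) \<ge> ereal D" by blast
      show "z \<le> Sup (ereal ` Bset f)" unfolding z
      proof (rule dense_le)
        fix y assume y: "y < ereal b"
        show "y \<le> Sup (ereal ` Bset f)"
        proof (cases y)
          case (real r)
          then have "r \<in> Bset f" using S_in_Bset[OF pos D] y by simp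
          then show ?thesis using real by (simp add: Sup_upper)
        qed (use y in auto)
      qed
    qed
  qed
  finally show ?thesis .
qed

lemma Aset_mono:
  fixes f :: "real \<Rightarrow> real"
  assumes pos: "\<forall>x\<ge>x1. f x > 0" and a: "a \<in> Aset f" and aa: "a \<le> a'"
  shows "a' \<in> Aset f"
proof -
  obtain C x0 where C: "C > 0" "x0 > 0" "\<forall>x\<ge>x0. \<forall>l\<ge>1. f (l*x) \<le> C * l powr a * f x"
    using a unfolding Aset_def by blast
  have "\<forall>x\<ge>max x0 x1. \<forall>l\<ge>1. f (l*x) \<le> C * l powr a' * f x"
  proof (intro allI impI)
    fix x l :: real assume x: "x \<ge> max x0 x1" and l: "l \<ge> 1"
    have "f (l*x) \<le> C * l powr a * f x" using C x l by auto
    also have "\<dots> \<le> C * l powr a' * f x" using pos x l aa C by (intro mult_right_mono mult_left_mono powr_mono) auto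
    finally show "f (l*x) \<le> C * l powr a' * f x" .
  qed
  thus ?thesis unfolding Aset_def using C by (intro CollectI exI[of _ C]) (auto intro: exI[of _ "max x0 x1"])
qed

lemma Bset_mono:
  fixes f :: "real \<Rightarrow> real"
  assumes pos: "\<forall>x\<ge>x1. f x > 0" and b: "b \<in> Bset f" and bb: "b' \<le> b"
  shows "b' \<in> Bset f"
proof -
  obtain D x0 where D: "D > 0" "x0 > 0" "\<forall>x\<ge>x0. \<forall>l\<ge>1. f (l*x) \<ge> D * l powr b * f x"
    using b unfolding Bset_def by blast
  have "\<forall>x\<ge>max x0 x1. \<forall>l\<ge>1. f (l*x) \<ge> D * l powr b' * f x"
  proof (intro allI impI)
    fix x l :: real assume x: "x \<ge> max x0 x1" and l: "l \<ge> 1"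
    have "D * l powr b' * f x \<le> D * l powr b * f x" using pos x l bb D by (intro mult_right_mono mult_left_mono powr_mono) auto
    also have "\<dots> \<le> f (l*x)" using D x l by auto
    finally show "f (l*x) \<ge> D * l powr b' * f x" .
  qed
  thus ?thesis unfolding Bset_def using D by (intro CollectI exI[of _ D]) (auto intro: exI[of _ "max x0 x1"])
qed

lemma Bset_le_Aset:
  fixes f :: "real \<Rightarrow> real"
  assumes pos: "\<forall>x\<ge>x1. f x > 0" and a: "a \<in> Aset f" and b: "b \<in> Bset f"
  shows "b \<le> a"
proof (rule ccontr)
  assume ba: "\<not> b \<le> a"
  obtain C x0 where C: "C > 0" "x0 > 0" "\<forall>x\<ge>x0. \<forall>l\<ge>1. f (l*x) \<le> C * l powr a * f x"
    using a unfolding Aset_def by blast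
  obtain D x2 where D: "D > 0" "x2 > 0" "\<forall>x\<ge>x2. \<forall>l\<ge>1. f (l*x) \<ge> D * l powr b * f x"
    using b unfolding Bset_def by blast
  define X where "X = max (max x0 x1) x2"
  define l where "l = (C/D + 1) powr (1/(b-a))"
  have fX: "f X > 0" using pos by (auto simp: X_def)
  have l1: "l \<ge> 1" unfolding l_def using C D ba by (intro ge_one_powr_ge_zero) auto
  have "D * l powr b * f X \<le> C * l powr a * f X" using C(3) D(3) l1 by (smt (verit) X_def max.cobounded1 max.cobounded2 order_trans)
  hence "D * l powr b \<le> C * l powr a" using fX by simp
  hence "l powr (b - a) \<le> C / D" using D l1 by (simp add: powr_diff field_simps)
  moreover have "l powr (b - a) = C/D + 1" unfolding l_def using ba C D by (simp add: powr_powr)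
  ultimately show False by simp
qed

lemma Aset_equiv_sub:
  fixes f h :: "real \<Rightarrow> real"
  assumes posh: "\<forall>x\<ge>x1. h x > 0" and c: "c > 0"
    and bd: "\<forall>x\<ge>x2. c * h x \<le> f x \<and> f x \<le> C * h x" and a: "a \<in> Aset h"
  shows "a \<in> Aset f"
proof -
  obtain C0 x0 where C0: "C0 > 0" "x0 > 0" "\<forall>x\<ge>x0. \<forall>l\<ge>1. h (l*x) \<le> C0 * l powr a * h x"
    using a unfolding Aset_def by blast
  define X where "X = max (max x0 x1) (max x2 1)"
  have CC: "C > 0" using bd posh c
    by (metis (no_types, opaque_lifting) max.cobounded1 max.cobounded2 mult_le_cancel_right_pos mult_pos_pos order_trans less_le_not_le nle_le order.strict_trans2 linorder_not_le zero_less_mult_pos2)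
  have "\<forall>x\<ge>X. \<forall>l\<ge>1. f (l*x) \<le> (C * C0 / c) * l powr a * f x"
  proof (intro allI impI)
    fix x l :: real assume x: "x \<ge> X" and l: "l \<ge> 1"
    have x1: "x \<ge> 1" "x \<ge> x0" "x \<ge> x1" "x \<ge> x2" using x by (auto simp: X_def)
    have lx: "l * x \<ge> x" using l x1 by simp
    have "f (l*x) \<le> C * h (l*x)" using bd[rule_format, of "l*x"] lx x1 by linarith
    also have "\<dots> \<le> C * (C0 * l powr a * h x)" using C0 x1 l CC by (intro mult_left_mono) auto
    also have "\<dots> \<le> C * (C0 * l powr a * (f x / c))"
    proof -
      have "h x \<le> f x / c" using bd x1 c by (simp add: field_simps mult.commute)
      thus ?thesis using CC C0 by (intro mult_left_mono) auto
    qed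
    also have "\<dots> = (C * C0 / c) * l powr a * f x" by simp
    finally show "f (l*x) \<le> (C * C0 / c) * l powr a * f x" .
  qed
  moreover have "C * C0 / c > 0" using CC C0 c by simp
  moreover have "X > 0" by (simp add: X_def)
  ultimately show ?thesis unfolding Aset_def by blast
qed

lemma Bset_equiv_sub:
  fixes f h :: "real \<Rightarrow> real"
  assumes posh: "\<forall>x\<ge>x1. h x > 0" and c: "c > 0"
    and bd: "\<forall>x\<ge>x2. c * h x \<le> f x \<and> f x \<le> C * h x" and b: "b \<in> Bset h"
  shows "b \<in> Bset f"
proof -
  obtain D0 x0 where D0: "D0 > 0" "x0 > 0" "\<forall>x\<ge>x0. \<forall>l\<ge>1. h (l*x) \<ge> D0 * l powr b * h x"
    using b unfolding Bset_def by blast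
  define X where "X = max (max x0 x1) (max x2 1)"
  have CC: "C > 0" using bd posh c
    by (metis (no_types, opaque_lifting) max.cobounded1 max.cobounded2 mult_le_cancel_right_pos mult_pos_pos order_trans less_le_not_le nle_le order.strict_trans2 linorder_not_le zero_less_mult_pos2)
  have "\<forall>x\<ge>X. \<forall>l\<ge>1. f (l*x) \<ge> (c * D0 / C) * l powr b * f x"
  proof (intro allI impI)
    fix x l :: real assume x: "x \<ge> X" and l: "l \<ge> 1"
    have x1: "x \<ge> 1" "x \<ge> x0" "x \<ge> x1" "x \<ge> x2" using x by (auto simp: X_def)
    have lx: "l * x \<ge> x" using l x1 by simp
    have "(c * D0 / C) * l powr b * f x = c * (D0 * l powr b * (f x / C))" by simp
    also have "\<dots> \<le> c * (D0 * l powr b * h x)"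
    proof -
      have "f x / C \<le> h x" using bd x1 CC by (simp add: field_simps mult.commute)
      thus ?thesis using c D0 by (intro mult_left_mono) auto
    qed
    also have "\<dots> \<le> c * h (l*x)" using D0 x1 l c by (intro mult_left_mono) auto
    also have "\<dots> \<le> f (l*x)" using bd[rule_format, of "l*x"] lx x1 by linarith
    finally show "f (l*x) \<ge> (c * D0 / C) * l powr b * f x" .
  qed
  moreover have "c * D0 / C > 0" using CC D0 c by simp
  moreover have "X > 0" by (simp add: X_def)
  ultimately show ?thesis unfolding Bset_def by blast
qed

lemma inv_index:
  fixes A B :: "real set"
  assumes AB: "\<forall>b\<in>B. b > 0 \<longrightarrow> 1/b \<in> A" and BA: "\<forall>a\<in>A. a > 0 \<longrightarrow> 1/a \<in> B"
    and b0: "b0 \<in> B" "b0 > 0" and Apos: "\<forall>a\<in>A. a > 0" and Bbd: "\<forall>b\<in>B. b \<le> u"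
  shows "Inf (ereal ` A) = 1 / Sup (ereal ` B) \<and> Sup (ereal ` B) = 1 / Inf (ereal ` A)"
proof -
  let ?s = "Sup (ereal ` B)"
  have s1: "ereal b0 \<le> ?s" using b0 by (simp add: Sup_upper)
  have s2: "?s \<le> ereal u" using Bbd by (simp add: Sup_le_iff)
  obtain r where r: "?s = ereal r" using s1 s2 by (cases ?s) auto
  have r0: "r > 0" using s1 b0 r by simp
  have I: "Inf (ereal ` A) = ereal (1/r)"
  proof (rule antisym)
    show "ereal (1/r) \<le> Inf (ereal ` A)"
    proof (rule Inf_greatest)
      fix z assume "z \<in> ereal ` A"
      then obtain a where z: "z = ereal a" and a: "a \<in> A" by blast
      have a0: "a > 0" using Apos a by auto
      have "ereal (1/a) \<le> ?s" using BA a a0 by (simp add: Sup_upper)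
      hence "1/a \<le> r" using r by simp
      hence "1/r \<le> a" using a0 r0 by (simp add: field_simps)
      thus "ereal (1/r) \<le> z" using z by simp
    qed
    show "Inf (ereal ` A) \<le> ereal (1/r)"
    proof (rule dense_ge)
      fix y assume y: "ereal (1/r) < y"
      show "Inf (ereal ` A) \<le> y"
      proof (cases y)
        case (real y')
        have y'0: "y' > 1/r" using y real by simp
        have y'p: "y' > 0" using y'0 r0 by (smt (verit) divide_pos_pos)
        have "1/y' < r" using y'0 r0 y'p by (simp add: field_simps)
        hence "ereal (1/y') < ?s" using r by simp
        then obtain b where b: "b \<in> B" "ereal (1/y') < ereal b" by (auto simp: less_Sup_iff)
        have bb: "b > 1/y'" using b by simp
        have b0': "b > 0" using bb y'p by (smt (verit) divide_pos_pos)
        have "1/b \<in> A" using AB b b0' by auto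
        hence "Inf (ereal ` A) \<le> ereal (1/b)" by (simp add: Inf_lower)
        also have "1/b < y'" using bb y'p b0' by (simp add: field_simps)
        finally show ?thesis using real by simp
      qed (use y in auto)
    qed
  qed
  show ?thesis using I r r0 by (simp add: divide_ereal_def inverse_eq_divide)
qed




locale wseq =
  fixes M :: "nat \<Rightarrow> real"
  assumes ws: "weight_seq M"
begin

abbreviation m where "m \<equiv> quot M"

lemma M0: "M 0 = 1" and Mpos: "M p > 0"
  using ws unfolding weight_seq_def by auto

lemma mpos: "m p > 0" using Mpos by (simp add: quot_def)

lemma m_Suc: "m p \<le> m (Suc p)"
proof -
  have "(M (Suc p))\<^sup>2 \<le> M p * M (Suc (Suc p))"
    using ws unfolding weight_seq_def by (metis Suc_eq_plus1 diff_Suc_1 le_add2)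
  hence "M (Suc p) * M (Suc p) \<le> M p * M (Suc (Suc p))" by (simp add: power2_eq_square)
  thus ?thesis using Mpos[of p] Mpos[of "Suc p"] unfolding quot_def
    by (simp add: divide_le_eq le_divide_eq mult.commute mult.left_commute)
qed

lemma m_mono: "p \<le> q \<Longrightarrow> m p \<le> m q"
  using lift_Suc_mono_le[of m, OF m_Suc] by blast

lemma M_prod: "M p = (\<Prod>j<p. m j)"
proof (induction p)
  case 0 then show ?case by (simp add: M0)
next
  case (Suc p)
  have "M (Suc p) = M p * m p" using Mpos[of p] by (simp add: quot_def)
  then show ?case using Suc by simp
qed

lemma m_unbounded: "\<exists>j. m j > t"
proof (rule ccontr)
  assume "\<not> (\<exists>j. m j > t)"
  hence le: "\<forall>j. m j \<le> t" by (simp add: not_less)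
  have t0: "t > 0" using le[rule_format, of 0] mpos[of 0] by linarith
  have "filterlim (\<lambda>p. root p (M p)) at_top sequentially" using ws unfolding weight_seq_def by (elim conjE)
  hence "eventually (\<lambda>p. t + 1 \<le> root p (M p)) sequentially" unfolding filterlim_at_top by blast
  then obtain p0 where p0: "\<forall>p\<ge>p0. t + 1 \<le> root p (M p)" unfolding eventually_sequentially by blast
  define p where "p = Suc p0"
  have "(\<Prod>j<p. m j) \<le> (\<Prod>j<p. t)" using le mpos by (intro prod_mono) (simp add: less_imp_le)
  hence "M p \<le> t ^ p" by (simp add: M_prod[of p, symmetric])
  hence "root p (M p) \<le> root p (t ^ p)" using p_def by (simp add: real_root_le_iff)
  also have "\<dots> = t" unfolding p_def using t0 by (intro real_root_power_cancel) auto
  moreover have "t + 1 \<le> root p (M p)" using p0 p_def by simp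
  ultimately show False by simp
qed

definition Nn :: "real \<Rightarrow> nat" where "Nn t = (LEAST j. t < m j)"

lemma Nn_iff: "j < Nn t \<longleftrightarrow> m j \<le> t"
proof
  assume "j < Nn t"
  thus "m j \<le> t" unfolding Nn_def using not_less_Least by fastforce
next
  assume a: "m j \<le> t"
  obtain k where k: "t < m k" using m_unbounded by blast
  have "t < m (Nn t)" unfolding Nn_def by (rule LeastI[of _ k]) (rule k)
  hence "\<not> Nn t \<le> j" using a m_mono by (meson not_le order.trans)
  thus "j < Nn t" by simp
qed

lemma Nn_set: "{j. m j \<le> t} = {..<Nn t}" using Nn_iff by auto

lemma nu_Nn: "nu_m m t = real (Nn t)" unfolding nu_m_def Nn_set by simp

lemma Nn_ge: "m k \<le> t \<Longrightarrow> Suc k \<le> Nn t" using Nn_iff by (simp add: Suc_le_eq)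
lemma m_Nn_gt: "t < m (Nn t)" using Nn_iff[of "Nn t" t] by simp
lemma Nn_le: assumes "t < m k" shows "Nn t \<le> k"
proof (rule ccontr)
  assume "\<not> Nn t \<le> k" hence "k < Nn t" by simp
  hence "m k \<le> t" using Nn_iff by blast
  thus False using assms by simp
qed
lemma Nn_mono: assumes "s \<le> t" shows "Nn s \<le> Nn t"
proof (rule ccontr)
  assume "\<not> Nn s \<le> Nn t" hence "Nn t < Nn s" by simp
  hence "m (Nn t) \<le> s" using Nn_iff by blast
  thus False using assms m_Nn_gt[of t] by simp
qed
lemma Nn_pos: "t \<ge> m 0 \<Longrightarrow> Nn t \<ge> 1" using Nn_ge[of 0 t] by simp
lemma m_Nn_le: "Nn t \<ge> 1 \<Longrightarrow> m (Nn t - 1) \<le> t" using Nn_iff[of "Nn t - 1" t] by simp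

definition Fs :: "real \<Rightarrow> nat \<Rightarrow> real" where "Fs s p = (\<Sum>j<p. ln (s / m j))"

lemma ln_ratio: "s > 0 \<Longrightarrow> ln (s ^ p / M p) = Fs s p"
proof -
  assume s: "s > 0"
  have "s ^ p / M p = (\<Prod>j<p. s / m j)" by (simp add: prod_dividef M_prod[of p, symmetric])
  hence "ln (s ^ p / M p) = (\<Sum>j<p. ln (s / m j))" using s mpos
    by (simp only:) (rule ln_prod, auto simp: less_imp_neq[symmetric])
  thus ?thesis by (simp add: Fs_def)
qed

lemma Fs_le: assumes s: "s > 0" shows "Fs s p \<le> Fs s (Nn s)"
proof (cases "p \<le> Nn s")
  case True
  have "Fs s (Nn s) = Fs s p + (\<Sum>j\<in>{p..<Nn s}. ln (s / m j))"
    unfolding Fs_def using True by (metis sum.atLeastLessThan_concat le0 atLeast0LessThan)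
  moreover have "(\<Sum>j\<in>{p..<Nn s}. ln (s / m j)) \<ge> 0"
    using s mpos Nn_iff by (intro sum_nonneg) (auto intro!: ln_ge_zero simp: le_divide_eq)
  ultimately show ?thesis by simp
next
  case False
  have "Fs s p = Fs s (Nn s) + (\<Sum>j\<in>{Nn s..<p}. ln (s / m j))"
    unfolding Fs_def using False by (metis sum.atLeastLessThan_concat le0 atLeast0LessThan nat_le_linear)
  moreover have "(\<Sum>j\<in>{Nn s..<p}. ln (s / m j)) \<le> 0"
  proof (intro sum_nonpos)
    fix j assume "j \<in> {Nn s..<p}"
    hence "s < m j" using Nn_iff[of j s] by auto
    thus "ln (s / m j) \<le> 0" using s mpos[of j] by (simp add: ln_div)
  qed
  ultimately show ?thesis by simp
qed

lemma omega_eq: assumes s: "s > 0" shows "omegaM M s = Fs s (Nn s)"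
proof -
  have "omegaM M s = (SUP p. ln (s ^ p / M p))" using s unfolding omegaM_def by simp
  also have "\<dots> = (SUP p. Fs s p)" using ln_ratio[OF s] by simp
  also have "\<dots> = Fs s (Nn s)"
    by (rule cSup_eq_maximum) (use Fs_le[OF s] in auto)
  finally show ?thesis .
qed

lemma Fs_le_omega: "s > 0 \<Longrightarrow> Fs s p \<le> omegaM M s" using omega_eq Fs_le by simp

lemma omega_nonneg: "s > 0 \<Longrightarrow> omegaM M s \<ge> 0" using Fs_le_omega[of s 0] by (simp add: Fs_def)

lemma omega_pos: assumes "s > m 0" shows "omegaM M s > 0"
proof -
  have s: "s > 0" using assms mpos[of 0] by linarith
  have "Fs s 1 = ln (s / m 0)" by (simp add: Fs_def)
  also have "\<dots> > 0" using assms mpos[of 0] by simp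
  finally show ?thesis using Fs_le_omega[OF s, of 1] by simp
qed

lemma ln_split: assumes "l > 0" "t > 0" shows "ln (l * t / m j) = ln l + ln (t / m j)"
proof -
  have "l * t / m j = l * (t / m j)" by simp
  thus ?thesis using ln_mult[of l "t / m j"] assms mpos[of j] by simp
qed

lemma W1: assumes t: "t > 0" and l: "l \<ge> 1"
  shows "omegaM M (l*t) \<ge> omegaM M t + real (Nn t) * ln l"
proof -
  have lt: "l * t > 0" using t l by simp
  have "Fs (l*t) (Nn t) = (\<Sum>j<Nn t. ln l + ln (t / m j))"
    unfolding Fs_def using t l by (intro sum.cong) (auto simp: ln_split)
  also have "\<dots> = real (Nn t) * ln l + omegaM M t" unfolding omega_eq[OF t] Fs_def by (simp add: sum.distrib)
  finally show ?thesis using Fs_le_omega[OF lt, of "Nn t"] by simp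
qed

lemma W2: assumes t: "t > 0" and l: "l \<ge> 1"
  shows "omegaM M (l*t) \<le> omegaM M t + real (Nn (l*t)) * ln l"
proof -
  have lt: "l * t > 0" using t l by simp
  have "omegaM M (l*t) = (\<Sum>j<Nn (l*t). ln l + ln (t / m j))"
    unfolding omega_eq[OF lt] Fs_def using t l by (intro sum.cong) (auto simp: ln_split)
  also have "\<dots> = real (Nn (l*t)) * ln l + Fs t (Nn (l*t))" unfolding Fs_def by (simp add: sum.distrib)
  finally show ?thesis using Fs_le_omega[OF t, of "Nn (l*t)"] by simp
qed

lemma omega_mono: assumes "0 < s" "s \<le> t" shows "omegaM M s \<le> omegaM M t"
proof -
  have "ln (t/s) \<ge> 0" using assms by (simp add: ln_ge_zero)
  moreover have "t / s * s = t" using assms by simp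
  ultimately show ?thesis using W1[of s "t/s"] assms by (smt (verit) le_divide_eq_1_pos of_nat_0_le_iff zero_le_mult_iff)
qed

end




lemma floor_facts:
  fixes y :: real assumes "y \<ge> 1"
  shows "nat \<lfloor>y\<rfloor> \<ge> 1" "real (nat \<lfloor>y\<rfloor>) \<le> y" "y < real (nat \<lfloor>y\<rfloor>) + 1"
  using assms by (auto simp: of_nat_nat) linarith

context wseq
begin

abbreviation g where "g \<equiv> seq_step m"

lemma g_nat: "g (real j + 1) = m j"
proof -
  have "nat \<lfloor>real j + 1\<rfloor> = j + 1" by linarith
  thus ?thesis unfolding seq_step_def by simp
qed

lemma g_pos: "g x > 0" unfolding seq_step_def using mpos by simp

definition DB where "DB \<longleftrightarrow> (\<exists>K\<ge>1. \<forall>k. m (2*k+1) \<le> K * m k)"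
definition SQ where "SQ \<longleftrightarrow> (\<exists>k::nat\<ge>2. \<exists>p0. \<forall>p\<ge>p0. m (k*p) \<ge> 2 * m p)"
definition AIg where "AIg a \<longleftrightarrow> (\<exists>C>0. \<forall>k j. k \<le> j \<longrightarrow> m j \<le> C * ((real j+1)/(real k+1)) powr a * m k)"
definition AIe where "AIe a \<longleftrightarrow> (\<exists>C>0. \<exists>k0. \<forall>k j. k0 \<le> k \<longrightarrow> k \<le> j \<longrightarrow> m j \<le> C * ((real j+1)/(real k+1)) powr a * m k)"
definition BIe where "BIe b \<longleftrightarrow> (\<exists>D>0. \<exists>k0. \<forall>k j. k0 \<le> k \<longrightarrow> k \<le> j \<longrightarrow> m j \<ge> D * ((real j+1)/(real k+1)) powr b * m k)"

lemma Aset_AIe: assumes "a \<in> Aset g" shows "AIe a"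
proof -
  obtain C x0 where C: "C > 0" "x0 > 0" "\<forall>x\<ge>x0. \<forall>l\<ge>1. g (l*x) \<le> C * l powr a * g x"
    using assms unfolding Aset_def by blast
  define k0 where "k0 = nat \<lceil>x0\<rceil>"
  have "m j \<le> C * ((real j+1)/(real k+1)) powr a * m k" if "k0 \<le> k" "k \<le> j" for k j
  proof -
    have x: "real k + 1 \<ge> x0" using that unfolding k0_def by linarith
    have l: "(real j+1)/(real k+1) \<ge> 1" using that by simp
    have "g ((real j+1)/(real k+1) * (real k + 1)) \<le> C * ((real j+1)/(real k+1)) powr a * g (real k + 1)"
      using C(3) x l by blast
    moreover have "(real j+1)/(real k+1) * (real k + 1) = real j + 1" by (simp add: field_simps)
    ultimately show ?thesis by (simp add: g_nat)
  qed
  thus ?thesis unfolding AIe_def using C by blast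
qed

lemma Bset_BIe: assumes "b \<in> Bset g" shows "BIe b"
proof -
  obtain D x0 where D: "D > 0" "x0 > 0" "\<forall>x\<ge>x0. \<forall>l\<ge>1. g (l*x) \<ge> D * l powr b * g x"
    using assms unfolding Bset_def by blast
  define k0 where "k0 = nat \<lceil>x0\<rceil>"
  have "m j \<ge> D * ((real j+1)/(real k+1)) powr b * m k" if "k0 \<le> k" "k \<le> j" for k j
  proof -
    have x: "real k + 1 \<ge> x0" using that unfolding k0_def by linarith
    have l: "(real j+1)/(real k+1) \<ge> 1" using that by simp
    have "g ((real j+1)/(real k+1) * (real k + 1)) \<ge> D * ((real j+1)/(real k+1)) powr b * g (real k + 1)"
      using D(3) x l by blast
    moreover have "(real j+1)/(real k+1) * (real k + 1) = real j + 1" by (simp add: field_simps)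
    ultimately show ?thesis by (simp add: g_nat)
  qed
  thus ?thesis unfolding BIe_def using D by blast
qed

lemma g_split:
  assumes x: "x \<ge> 2" and l: "l \<ge> 1"
  obtains j k where "g (l*x) = m j" "g x = m k" "k \<le> j" "real k + 1 > x - 1" "real k + 1 \<le> x"
     "real j + 1 \<le> l * x" "real j + 1 > l * x - 1"
proof -
  have lx: "l * x \<ge> x" using x l by simp
  define J where "J = nat \<lfloor>l*x\<rfloor>"
  define K where "K = nat \<lfloor>x\<rfloor>"
  have J: "J \<ge> 1" "real J \<le> l*x" "l*x < real J + 1" using floor_facts[of "l*x"] lx x unfolding J_def by auto
  have K: "K \<ge> 1" "real K \<le> x" "x < real K + 1" using floor_facts[of x] x unfolding K_def by auto
  have KJ: "K \<le> J" unfolding J_def K_def using lx by (simp add: floor_mono nat_mono)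
  have e1: "g (l*x) = m (J - 1)" unfolding seq_step_def J_def ..
  have e2: "g x = m (K - 1)" unfolding seq_step_def K_def ..
  have e3: "K - 1 \<le> J - 1" using KJ by simp
  have e4: "real (K - 1) + 1 = real K" "real (J - 1) + 1 = real J" using J K by (simp_all add: of_nat_diff)
  show ?thesis
    by (rule that[of "J - 1" "K - 1"]) (use e1 e2 e3 e4 J K in linarith)+
qed

lemma AIe_Aset: assumes "AIe a" "a \<ge> 0" shows "a \<in> Aset g"
proof -
  obtain C k0 where C: "C > 0" "\<forall>k j. k0 \<le> k \<longrightarrow> k \<le> j \<longrightarrow> m j \<le> C * ((real j+1)/(real k+1)) powr a * m k"
    using assms unfolding AIe_def by blast
  have "g (l*x) \<le> (C * 2 powr a) * l powr a * g x" if x: "x \<ge> real k0 + 2" and l: "l \<ge> 1" for x l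
  proof -
    obtain j k where jk: "g (l*x) = m j" "g x = m k" "k \<le> j" "real k + 1 > x - 1" "real k + 1 \<le> x"
       "real j + 1 \<le> l * x" "real j + 1 > l * x - 1" using g_split[of x l] x l by auto
    have kk: "k0 \<le> k" using jk x by linarith
    have "(real j+1)/(real k+1) \<le> (l*x)/(x/2)"
      using jk x by (intro frac_le) auto
    also have "\<dots> = 2 * l" using x by simp
    finally have r: "(real j+1)/(real k+1) \<le> 2 * l" .
    have "m j \<le> C * ((real j+1)/(real k+1)) powr a * m k" using C kk jk by blast
    also have "\<dots> \<le> C * (2 * l) powr a * m k" using r assms(2) C mpos[of k]
      by (intro mult_right_mono mult_left_mono powr_mono2) auto
    also have "\<dots> = (C * 2 powr a) * l powr a * m k" using l by (simp add: powr_mult)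
    finally show ?thesis using jk by simp
  qed
  moreover have "C * 2 powr a > 0" using C by simp
  moreover have "real k0 + 2 > 0" by simp
  ultimately show ?thesis unfolding Aset_def by blast
qed

lemma BIe_Bset: assumes "BIe b" "b \<ge> 0" shows "b \<in> Bset g"
proof -
  obtain D k0 where D: "D > 0" "\<forall>k j. k0 \<le> k \<longrightarrow> k \<le> j \<longrightarrow> m j \<ge> D * ((real j+1)/(real k+1)) powr b * m k"
    using assms unfolding BIe_def by blast
  have "g (l*x) \<ge> (D * (1/2) powr b) * l powr b * g x" if x: "x \<ge> real k0 + 2" and l: "l \<ge> 1" for x l
  proof -
    obtain j k where jk: "g (l*x) = m j" "g x = m k" "k \<le> j" "real k + 1 > x - 1" "real k + 1 \<le> x"
       "real j + 1 \<le> l * x" "real j + 1 > l * x - 1" using g_split[of x l] x l by auto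
    have kk: "k0 \<le> k" using jk x by linarith
    have lx2: "l * x \<ge> 2" using x l by (smt (verit) mult_le_cancel_right1 of_nat_0_le_iff)
    have "l / 2 = (l*x/2) / x" using x by simp
    also have "\<dots> \<le> (real j+1)/(real k+1)"
      using jk x lx2 by (intro frac_le) auto
    finally have r: "l/2 \<le> (real j+1)/(real k+1)" .
    have "(D * (1/2) powr b) * l powr b * m k = D * (l/2) powr b * m k" using l by (simp add: powr_mult powr_divide)
    also have "\<dots> \<le> D * ((real j+1)/(real k+1)) powr b * m k" using r assms(2) D mpos[of k] l
      by (intro mult_right_mono mult_left_mono powr_mono2) auto
    also have "\<dots> \<le> m j" using D kk jk by blast
    finally show ?thesis using jk by simp
  qed
  moreover have "D * (1/2) powr b > 0" using D by simp
  moreover have "real k0 + 2 > 0" by simp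
  ultimately show ?thesis unfolding Bset_def by blast
qed

lemma DB_eventual: assumes "\<forall>k\<ge>k0. m (2*k+1) \<le> K * m k" shows DB
proof -
  define K' where "K' = max 1 K + (\<Sum>k<k0. m (2*k+1) / m k)"
  have S: "(\<Sum>k<k0. m (2*k+1) / m k) \<ge> 0" using mpos by (intro sum_nonneg) (simp add: less_imp_le)
  have "m (2*k+1) \<le> K' * m k" for k
  proof (cases "k \<ge> k0")
    case True
    hence "m (2*k+1) \<le> K * m k" using assms by blast
    also have "\<dots> \<le> K' * m k" using S mpos[of k] unfolding K'_def by (intro mult_right_mono) auto
    finally show ?thesis .
  next
    case False
    hence "m (2*k+1) / m k \<le> (\<Sum>k<k0. m (2*k+1) / m k)"
      using mpos by (intro member_le_sum) (auto simp: less_imp_le)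
    also have "\<dots> \<le> K'" unfolding K'_def by simp
    finally show ?thesis using mpos[of k] by (simp add: divide_le_eq)
  qed
  moreover have "K' \<ge> 1" using S unfolding K'_def by linarith
  ultimately show ?thesis unfolding DB_def by blast
qed

lemma AIe_DB: assumes "AIe a" shows DB
proof -
  obtain C k0 where C: "C > 0" "\<forall>k j. k0 \<le> k \<longrightarrow> k \<le> j \<longrightarrow> m j \<le> C * ((real j+1)/(real k+1)) powr a * m k"
    using assms unfolding AIe_def by blast
  have "\<forall>k\<ge>k0. m (2*k+1) \<le> (C * 2 powr a) * m k"
  proof (intro allI impI)
    fix k assume k: "k \<ge> k0"
    have h: "m (2*k+1) \<le> C * ((real (2*k+1)+1)/(real k+1)) powr a * m k" by (rule C(2)[rule_format]) (use k in auto)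
    have e: "(real (2*k+1)+1)/(real k+1) = 2" by (simp add: field_simps)
    from h show "m (2*k+1) \<le> (C * 2 powr a) * m k" unfolding e by simp
  qed
  thus ?thesis by (rule DB_eventual)
qed

lemma DB_AIg: assumes DB shows "\<exists>a\<ge>0. AIg a"
proof -
  obtain K where K: "K \<ge> 1" "\<forall>k. m (2*k+1) \<le> K * m k" using assms unfolding DB_def by blast
  define a where "a = log 2 K"
  have a0: "a \<ge> 0" using K unfolding a_def by simp
  have Ka: "2 powr a = K" using K unfolding a_def by simp
  have P: "\<forall>k\<le>j. m j \<le> K * (max 1 (real j/(real k+1))) powr a * m k" for j
  proof (induction j rule: less_induct)
    case (less j)
    show ?case
    proof (intro allI impI)
      fix k assume kj: "k \<le> j"
      have mx: "(max 1 (real j/(real k+1))) powr a \<ge> 1" using a0 by (simp add: ge_one_powr_ge_zero)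
      show "m j \<le> K * (max 1 (real j/(real k+1))) powr a * m k"
      proof (cases "j \<le> 2*k+1")
        case True
        have "m j \<le> m (2*k+1)" using True m_mono by blast
        also have "\<dots> \<le> K * m k" using K by blast
        also have "\<dots> \<le> K * (max 1 (real j/(real k+1))) powr a * m k"
          using mx K mpos[of k] by (simp add: mult_right_mono)
        finally show ?thesis .
      next
        case False
        define i where "i = j div 2"
        have ik: "k + 1 \<le> i" using False unfolding i_def by linarith
        have ij: "i < j" using False unfolding i_def by linarith
        have ji: "j \<le> 2*i+1" unfolding i_def by linarith
        have ik': "real i / (real k + 1) \<ge> 1" using ik by simp
        have "m j \<le> m (2*i+1)" using ji m_mono by blast
        also have "\<dots> \<le> K * m i" using K by blast
        also have "\<dots> \<le> K * (K * (real i/(real k+1)) powr a * m k)"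
        proof -
          have "m i \<le> K * (max 1 (real i/(real k+1))) powr a * m k" using less.IH[OF ij, rule_format, of k] ik by linarith
          also have "max 1 (real i/(real k+1)) = real i/(real k+1)" using ik' by simp
          finally show ?thesis using K by simp
        qed
        also have "K * (K * (real i/(real k+1)) powr a * m k) = K * (2 * (real i/(real k+1))) powr a * m k"
        proof -
          have "(2 * (real i/(real k+1))) powr a = 2 powr a * (real i/(real k+1)) powr a" by (rule powr_mult)
          thus ?thesis using Ka by (simp only: mult.assoc)
        qed
        also have "\<dots> \<le> K * (max 1 (real j/(real k+1))) powr a * m k"
        proof -
          have "2 * (real i/(real k+1)) \<le> real j/(real k+1)"
            unfolding i_def by (simp add: divide_right_mono)
          hence "2 * (real i/(real k+1)) \<le> max 1 (real j/(real k+1))" by linarith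
          thus ?thesis using a0 K mpos[of k] by (intro mult_right_mono mult_left_mono powr_mono2) auto
        qed
        finally show ?thesis .
      qed
    qed
  qed
  have "m j \<le> K * ((real j+1)/(real k+1)) powr a * m k" if "k \<le> j" for k j
  proof -
    have "max 1 (real j/(real k+1)) \<le> (real j+1)/(real k+1)" using that by (auto simp: divide_right_mono)
    hence "(max 1 (real j/(real k+1))) powr a \<le> ((real j+1)/(real k+1)) powr a" using a0 by (intro powr_mono2) auto
    thus ?thesis using P[of j] that K mpos[of k] by (smt (verit) mult_left_mono mult_right_mono)
  qed
  hence "AIg a" unfolding AIg_def using K by (intro exI[of _ K]) auto
  thus ?thesis using a0 by blast
qed

lemma AIg_AIe: "AIg a \<Longrightarrow> AIe a" unfolding AIg_def AIe_def by blast

lemma M_split: "M (a + b) = M a * (\<Prod>j<b. m (a + j))"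
proof (induction b)
  case 0 then show ?case by simp
next
  case (Suc b)
  have "M (a + Suc b) = M (a + b) * m (a + b)" using Mpos[of "a+b"] by (simp add: quot_def)
  then show ?case using Suc by (simp add: mult.assoc)
qed

lemma M_le_pow: "M p \<le> m p ^ p"
proof -
  have "M p = (\<Prod>j<p. m j)" by (rule M_prod)
  also have "\<dots> \<le> (\<Prod>j<p. m p)" using mpos m_mono by (intro prod_mono) (auto simp: less_imp_le)
  finally show ?thesis by simp
qed

lemma mg_DB: assumes "moderate_growth M" shows DB
proof -
  obtain A where A: "A > 0" "\<forall>p q. M (p + q) \<le> A ^ (p + q) * M p * M q"
    using assms unfolding moderate_growth_def by blast
  define A' where "A' = max A 1"
  have A': "A' \<ge> 1" "\<forall>p q. M (p + q) \<le> A' ^ (p + q) * M p * M q"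
  proof -
    show "A' \<ge> 1" unfolding A'_def by simp
    show "\<forall>p q. M (p + q) \<le> A' ^ (p + q) * M p * M q"
    proof (intro allI)
      fix p q
      have "A ^ (p+q) \<le> A' ^ (p+q)" using A unfolding A'_def by (intro power_mono) auto
      hence "A ^ (p + q) * M p * M q \<le> A' ^ (p + q) * M p * M q" using Mpos[of p] Mpos[of q] by simp
      thus "M (p + q) \<le> A' ^ (p + q) * M p * M q" using A by (meson order.trans)
    qed
  qed
  have "\<forall>p\<ge>1. m (2*p+1) \<le> A'^4 * m p"
  proof (intro allI impI)
    fix p :: nat assume p: "p \<ge> 1"
    have "m (2*p+1) ^ p = (\<Prod>j<p. m (2*p+1))" by simp
    also have "\<dots> \<le> (\<Prod>j<p. m (2*p+1 + j))" using mpos m_mono by (intro prod_mono) (auto simp: less_imp_le)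
    also have "\<dots> = M (2*p+1 + p) / M (2*p+1)" using Mpos[of "2*p+1"] M_split[of "2*p+1" p] by (simp only:) simp
    also have "\<dots> \<le> A' ^ (2*p+1+p) * M p"
      using A'(2)[rule_format, of "2*p+1" p] Mpos[of "2*p+1"] by (simp add: divide_le_eq mult.commute mult.left_commute)
    also have "\<dots> \<le> (A'^4) ^ p * m p ^ p"
    proof (intro mult_mono)
      show "A' ^ (2*p+1+p) \<le> (A'^4) ^ p" unfolding power_mult[symmetric] using A' p by (intro power_increasing) auto
    qed (use M_le_pow Mpos[of p] A' in auto)
    also have "\<dots> = (A'^4 * m p) ^ p" by (simp add: power_mult_distrib)
    finally have pw: "m (2*p+1) ^ p \<le> (A'^4 * m p) ^ p" .
    obtain p' where p': "p = Suc p'" using p by (cases p) auto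
    have pw': "m (2*p+1) ^ Suc p' \<le> (A'^4 * m p) ^ Suc p'" using pw unfolding p' .
    have "0 \<le> A'^4 * m p" using mpos[of p] A' by simp
    thus "m (2*p+1) \<le> A'^4 * m p" using power_le_imp_le_base[OF pw'] by blast
  qed
  thus ?thesis by (rule DB_eventual)
qed

lemma prod_binom: "(\<Prod>i<q. (real p + real i + 1) / (real i + 1)) = real ((p + q) choose q)"
proof (induction q)
  case 0 then show ?case by simp
next
  case (Suc q)
  have e: "real (Suc q) * real ((p + Suc q) choose Suc q) = real (Suc (p+q)) * real ((p + q) choose q)"
    using Suc_times_binomial[of q "p+q"] by (metis add_Suc_right of_nat_mult)
  have "(\<Prod>i<Suc q. (real p + real i + 1) / (real i + 1)) = real ((p + q) choose q) * ((real p + real q + 1) / (real q + 1))"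
    using Suc by simp
  also have "\<dots> = real ((p + Suc q) choose Suc q)" using e by (simp add: field_simps)
  finally show ?case .
qed

lemma DB_mg: assumes DB shows "moderate_growth M"
proof -
  obtain a where a: "a \<ge> 0" "AIg a" using DB_AIg[OF assms] by blast
  obtain C where C: "C > 0" "\<forall>k j. k \<le> j \<longrightarrow> m j \<le> C * ((real j+1)/(real k+1)) powr a * m k"
    using a unfolding AIg_def by blast
  define C' where "C' = max C 1"
  define A where "A = C' * 2 powr a"
  have C': "C' \<ge> 1" "C \<le> C'" unfolding C'_def by auto
  have "M (p + q) \<le> A ^ (p + q) * M p * M q" for p q
  proof -
    have "(\<Prod>i<q. m (p + i)) \<le> (\<Prod>i<q. C' * ((real p + real i + 1)/(real i + 1)) powr a * m i)"
    proof (intro prod_mono conjI)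
      fix i assume "i \<in> {..<q}"
      have "m (p+i) \<le> C * ((real (p+i)+1)/(real i+1)) powr a * m i" by (rule C(2)[rule_format]) simp
      also have "\<dots> \<le> C' * ((real p + real i + 1)/(real i + 1)) powr a * m i"
        using C' mpos[of i] by (intro mult_right_mono) (auto simp: add.assoc)
      finally show "m (p+i) \<le> C' * ((real p + real i + 1)/(real i + 1)) powr a * m i" .
    qed (use mpos in \<open>auto simp: less_imp_le\<close>)
    also have "\<dots> = C' ^ q * (\<Prod>i<q. (real p + real i + 1)/(real i + 1)) powr a * M q"
      by (simp add: prod.distrib prod_powr_distrib M_prod)
    also have "\<dots> = C' ^ q * (real ((p + q) choose q)) powr a * M q" by (simp add: prod_binom)
    also have "\<dots> \<le> C' ^ (p+q) * (2 ^ (p+q)) powr a * M q"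
    proof (intro mult_mono)
      show "C' ^ q \<le> C' ^ (p+q)" using C' by (intro power_increasing) auto
      show "real ((p + q) choose q) powr a \<le> (2 ^ (p + q)) powr a"
        using a binomial_le_pow2[of "p+q" q] by (intro powr_mono2) (auto simp: of_nat_le_iff[symmetric])
    qed (use C' Mpos[of q] in auto)
    also have "\<dots> = A ^ (p+q) * M q"
      unfolding A_def by (simp add: power_mult_distrib powr_realpow[symmetric] powr_powr mult.commute powr_power)
    finally have "(\<Prod>i<q. m (p + i)) \<le> A ^ (p+q) * M q" .
    hence "M p * (\<Prod>i<q. m (p + i)) \<le> M p * (A ^ (p+q) * M q)" using Mpos[of p] by simp
    thus ?thesis by (simp add: M_split mult_ac)
  qed
  moreover have "A > 0" unfolding A_def using C' by simp
  ultimately show ?thesis unfolding moderate_growth_def by blast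
qed

end



lemma sum_shift_ivl: fixes L p :: nat shows "(\<Sum>j<L. f (p + j)) = (\<Sum>q\<in>{p..<p+L}. (f q :: real))"
  by (induction L) simp_all

context wseq
begin

lemma SQ_BIe: assumes SQ shows "\<exists>b>0. BIe b"
proof -
  obtain k :: nat and p0 where k: "k \<ge> 2" "\<forall>p\<ge>p0. m (k*p) \<ge> 2 * m p" using assms unfolding SQ_def by blast
  define b where "b = log (real k) 2"
  have kr: "real k \<ge> 2" using k by simp
  have b0: "b > 0" unfolding b_def using kr by simp
  have kb: "real k powr b = 2" unfolding b_def using kr by simp
  have P: "\<forall>p\<ge>p0. p \<le> j \<longrightarrow> m j \<ge> ((real j+1)/(real k*(real p+1))) powr b * m p" for j
  proof (induction j rule: less_induct)
    case (less j)
    show ?case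
    proof (intro allI impI)
      fix p assume p: "p0 \<le> p" and pj: "p \<le> j"
      show "m j \<ge> ((real j+1)/(real k*(real p+1))) powr b * m p"
      proof (cases "j + 1 \<le> k*(p+1)")
        case True
        have "real (j+1) \<le> real (k*(p+1))" using True by (simp only: of_nat_le_iff)
        hence "real j + 1 \<le> real k * (real p + 1)" by (simp add: algebra_simps)
        hence "(real j+1)/(real k*(real p+1)) \<le> 1" using kr by (simp add: divide_le_eq)
        hence "((real j+1)/(real k*(real p+1))) powr b \<le> 1" using b0 kr
          by (intro powr_le1) auto
        hence "((real j+1)/(real k*(real p+1))) powr b * m p \<le> m p" using mpos[of p]
          by (simp add: mult_le_cancel_right1)
        also have "m p \<le> m j" using pj m_mono by blast
        finally show ?thesis .
      next
        case False
        define i where "i = j div k"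
        have d: "k * i + j mod k = j" unfolding i_def by (rule mult_div_mod_eq)
        have md: "j mod k < k" using k by simp
        have ki: "k * (i + 1) = k * i + k" by simp
        have jki: "j + 1 \<le> k * (i + 1)" using d md ki by linarith
        have kij: "k * i \<le> j" using d by linarith
        have ip: "p + 1 \<le> i"
        proof (rule ccontr)
          assume "\<not> p + 1 \<le> i"
          hence "i + 1 \<le> p + 1" by simp
          hence "k * (i + 1) \<le> k * (p + 1)" by (rule mult_le_mono2)
          thus False using jki False by linarith
        qed
        have ij: "i < j"
        proof -
          have "k * i \<ge> 2 * i" using k by simp
          thus ?thesis using kij ip by linarith
        qed
        have ih: "m i \<ge> ((real i+1)/(real k*(real p+1))) powr b * m p"
          using less.IH[OF ij] p ip by simp
        have "((real j+1)/(real k*(real p+1))) powr b * m p \<le> ((real i+1)/(real p+1)) powr b * m p"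
        proof -
          have "real (j+1) \<le> real (k*(i+1))" using jki by (simp only: of_nat_le_iff)
          hence "real j + 1 \<le> real k * (real i + 1)" by (simp add: algebra_simps)
          hence "(real j+1)/(real k*(real p+1)) \<le> (real k * (real i + 1))/(real k*(real p+1))"
            using kr by (intro divide_right_mono) auto
          also have "\<dots> = (real i+1)/(real p+1)" using kr by simp
          finally have "(real j+1)/(real k*(real p+1)) \<le> (real i+1)/(real p+1)" .
          thus ?thesis using b0 mpos[of p] by (intro mult_right_mono powr_mono2) auto
        qed
        also have "((real i+1)/(real p+1)) = real k * ((real i+1)/(real k*(real p+1)))" using kr by simp
        also have "(real k * ((real i+1)/(real k*(real p+1)))) powr b = 2 * ((real i+1)/(real k*(real p+1))) powr b"
          using powr_mult[of "real k" "(real i+1)/(real k*(real p+1))" b] kr kb by simp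
        also have "2 * ((real i+1)/(real k*(real p+1))) powr b * m p \<le> 2 * m i" using ih by simp
        also have "\<dots> \<le> m (k*i)" using k(2) p ip by simp
        also have "\<dots> \<le> m j" using kij m_mono by blast
        finally show ?thesis .
      qed
    qed
  qed
  have "m j \<ge> (1/2) * ((real j+1)/(real p+1)) powr b * m p" if "p0 \<le> p" "p \<le> j" for p j
  proof -
    have "(1/2) * ((real j+1)/(real p+1)) powr b = ((real j+1)/(real k*(real p+1))) powr b"
      using kb kr powr_mult[of "real k" "real p + 1" b] by (simp add: powr_divide)
    thus ?thesis using P[of j] that by simp
  qed
  hence "BIe b" unfolding BIe_def by (intro exI[of _ "1/2"]) auto
  thus ?thesis using b0 by blast
qed

lemma BIe_SQ: assumes "BIe b" "b > 0" shows SQ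
proof -
  obtain D k0 where D: "D > 0" "\<forall>k j. k0 \<le> k \<longrightarrow> k \<le> j \<longrightarrow> m j \<ge> D * ((real j+1)/(real k+1)) powr b * m k"
    using assms unfolding BIe_def by blast
  define c where "c = (2/D) powr (1/b)"
  define k where "k = 2 * nat \<lceil>c\<rceil> + 2"
  have k2: "k \<ge> 2" unfolding k_def by simp
  have c0: "c > 0" unfolding c_def using D by simp
  have kc: "real k / 2 \<ge> c"
  proof -
    have "c \<le> real (nat \<lceil>c\<rceil>)" by (rule real_nat_ceiling_ge)
    thus ?thesis unfolding k_def by simp
  qed
  have "(real k / 2) powr b \<ge> c powr b" using kc c0 assms(2) by (intro powr_mono2) auto
  also have "c powr b = 2/D" unfolding c_def using D assms(2) by (simp add: powr_powr)
  finally have kb: "D * (real k / 2) powr b \<ge> 2" using D by (simp add: field_simps)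
  have "\<forall>p\<ge>max k0 1. m (k*p) \<ge> 2 * m p"
  proof (intro allI impI)
    fix p assume p: "p \<ge> max k0 1"
    have r: "(real (k*p)+1)/(real p+1) \<ge> real k / 2"
    proof -
      have h1: "real p \<ge> 1" using p by simp
      have "real k * 1 \<le> real k * real p" using h1 by (intro mult_left_mono) auto
      hence "real k * real p + real k \<le> 2 * (real k * real p) + 2" by linarith
      hence "real k * (real p + 1) \<le> 2 * (real k * real p + 1)" by (simp add: algebra_simps)
      thus ?thesis by (simp add: field_simps)
    qed
    have "2 * m p \<le> D * (real k / 2) powr b * m p" using kb mpos[of p] by simp
    also have "\<dots> \<le> D * ((real (k*p)+1)/(real p+1)) powr b * m p"
      using r D assms(2) mpos[of p] k2 by (intro mult_right_mono mult_left_mono powr_mono2) auto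
    also have "\<dots> \<le> m (k*p)" using D(2) p k2 by (intro D(2)[rule_format]) auto
    finally show "m (k*p) \<ge> 2 * m p" .
  qed
  thus ?thesis unfolding SQ_def using k2 by blast
qed

end



lemma harm_blocks:
  fixes p :: nat assumes p: "p \<ge> 1"
  shows "(\<Sum>q\<in>{p..<2^n*p}. 1/(real q+1)) \<ge> real n / 2"
proof (induction n)
  case 0 then show ?case by simp
next
  case (Suc n)
  have le1: "p \<le> 2^n*p" by simp
  have le2: "2^n*p \<le> 2^Suc n*p" by simp
  have blk: "(\<Sum>q\<in>{2^n*p..<2^Suc n*p}. 1/(real q+1)) \<ge> 1/2"
  proof -
    have "\<forall>q\<in>{2^n*p..<2^Suc n*p}. 1/(real (2^Suc n*p)) \<le> 1/(real q+1)"
    proof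
      fix q assume q: "q \<in> {2^n*p..<2^Suc n*p}"
      hence "real q + 1 \<le> real (2^Suc n*p)" by (simp only: atLeastLessThan_iff) (metis Suc_leI of_nat_Suc of_nat_le_iff add.commute)
      thus "1/(real (2^Suc n*p)) \<le> 1/(real q+1)" using p by (intro divide_left_mono) auto
    qed
    hence "real (card {2^n*p..<2^Suc n*p}) * (1/(real (2^Suc n*p))) \<le> (\<Sum>q\<in>{2^n*p..<2^Suc n*p}. 1/(real q+1))"
      by (intro sum_bounded_below) auto
    moreover have "real (card {2^n*p..<2^Suc n*p}) * (1/(real (2^Suc n*p))) = 1/2" using p by simp
    ultimately show ?thesis by linarith
  qed
  have "(\<Sum>q\<in>{p..<2^Suc n*p}. 1/(real q+1)) = (\<Sum>q\<in>{p..<2^n*p}. 1/(real q+1)) + (\<Sum>q\<in>{2^n*p..<2^Suc n*p}. 1/(real q+1))"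
    using sum.atLeastLessThan_concat[OF le1 le2, of "\<lambda>q. 1/(real q+1)"] by simp
  thus ?case using Suc blk by simp
qed

context wseq
begin

definition aa where "aa q = M q / ((real q + 1) * M (Suc q))"

lemma aa_eq: "aa q = 1 / ((real q + 1) * m q)"
  unfolding aa_def quot_def using Mpos[of q] by (simp add: field_simps)

lemma aa_pos: "aa q > 0" unfolding aa_eq using mpos[of q] by simp

lemma snq_unfold: "strongly_nonquasianalytic M \<longleftrightarrow>
   summable aa \<and> (\<exists>B>0. \<forall>p. (\<Sum>j. aa (p+j)) \<le> B / m p)"
proof -
  have "M p / M (Suc p) = 1 / m p" for p unfolding quot_def by simp
  thus ?thesis unfolding strongly_nonquasianalytic_def aa_def[abs_def] by (simp add: divide_inverse)
qed

lemma snq_SQ: assumes "strongly_nonquasianalytic M" shows SQ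
proof -
  obtain B where sm: "summable aa" and B: "B > 0" "\<forall>p. (\<Sum>j. aa (p+j)) \<le> B / m p"
    using assms unfolding snq_unfold by blast
  have key: "m (2^n*p) \<ge> (real n/(2*B)) * m p" if p: "p \<ge> 1" for n p
  proof -
    have smp: "summable (\<lambda>j. aa (p+j))" using summable_ignore_initial_segment[OF sm, of p] by (simp add: add.commute)
    have "(\<Sum>q\<in>{p..<2^n*p}. aa q) = (\<Sum>j<2^n*p - p. aa (p+j))"
      using sum_shift_ivl[where L="2^n*p - p" and p=p and f=aa] by simp
    also have "\<dots> \<le> (\<Sum>j. aa (p+j))" using smp aa_pos by (intro sum_le_suminf) (auto simp: less_imp_le)
    also have "\<dots> \<le> B / m p" using B by blast
    finally have S1: "(\<Sum>q\<in>{p..<2^n*p}. aa q) \<le> B / m p" .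
    have "(\<Sum>q\<in>{p..<2^n*p}. 1/(real q+1)) / m (2^n*p) = (\<Sum>q\<in>{p..<2^n*p}. 1/((real q+1) * m (2^n*p)))"
      by (simp add: sum_divide_distrib)
    also have "\<dots> \<le> (\<Sum>q\<in>{p..<2^n*p}. aa q)"
    proof (intro sum_mono)
      fix q assume q: "q \<in> {p..<2^n*p}"
      have "m q \<le> m (2^n*p)" using q m_mono by auto
      hence "(real q+1) * m q \<le> (real q+1) * m (2^n*p)" by (intro mult_left_mono) auto
      thus "1/((real q+1) * m (2^n*p)) \<le> aa q" unfolding aa_eq using mpos[of q]
        by (intro divide_left_mono) auto
    qed
    finally have "(real n / 2) / m (2^n*p) \<le> B / m p"
      using S1 harm_blocks[OF p, of n] mpos[of "2^n*p"] by (smt (verit) divide_right_mono)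
    thus ?thesis using mpos[of p] mpos[of "2^n*p"] B by (simp add: field_simps)
  qed
  define n where "n = nat \<lceil>4*B\<rceil> + 1"
  have n4: "real n \<ge> 4*B" unfolding n_def by linarith
  have "\<forall>p\<ge>1. m (2^n*p) \<ge> 2 * m p"
  proof (intro allI impI)
    fix p :: nat assume p: "p \<ge> 1"
    have "2 \<le> real n/(2*B)" using n4 B by (simp add: field_simps)
    hence "2 * m p \<le> (real n/(2*B)) * m p" using mpos[of p] by (intro mult_right_mono) auto
    also have "\<dots> \<le> m (2^n*p)" using key[OF p] .
    finally show "m (2^n*p) \<ge> 2 * m p" .
  qed
  moreover have "(2::nat)^n \<ge> 2" unfolding n_def by simp
  ultimately show ?thesis unfolding SQ_def by blast
qed

lemma SQ_snq: assumes SQ shows "strongly_nonquasianalytic M"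
proof -
  obtain k :: nat and p1 where k: "k \<ge> 2" "\<forall>p\<ge>p1. m (k*p) \<ge> 2 * m p" using assms unfolding SQ_def by blast
  define p0 where "p0 = max p1 1"
  have k0: "\<forall>p\<ge>p0. m (k*p) \<ge> 2 * m p" using k unfolding p0_def by auto
  have p01: "p0 \<ge> 1" unfolding p0_def by simp
  have kr: "real k \<ge> 2" using k by simp
  have kip: "p \<le> k^i * p" for i p
  proof -
    have "k^i \<ge> 1" using k by simp
    thus ?thesis by simp
  qed
  have G: "m (k^i * p) \<ge> 2^i * m p" if p: "p \<ge> p0" for i p
  proof (induction i)
    case 0 then show ?case by simp
  next
    case (Suc i)
    have "k^i * p \<ge> p0" using p kip[of p i] by linarith
    hence "m (k * (k^i * p)) \<ge> 2 * m (k^i * p)" using k0 by blast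
    moreover have "2 * m (k^i * p) \<ge> 2 * (2^i * m p)" using Suc by simp
    ultimately show ?case by (simp add: mult.assoc)
  qed
  have blk: "(\<Sum>q\<in>{k^i*p..<k^Suc i*p}. aa q) \<le> real k / (2^i * m p)" if p: "p \<ge> p0" for i p
  proof -
    have pp: "real p \<ge> 1" using p p01 by simp
    have kpos: "real (k^i*p) > 0" using k p p01 by simp
    define bd where "bd = 1 / (real (k^i*p) * (2^i * m p))"
    have "\<forall>q\<in>{k^i*p..<k^Suc i*p}. aa q \<le> bd"
    proof
      fix q assume q: "q \<in> {k^i*p..<k^Suc i*p}"
      have "k^i*p \<le> q" using q by simp
      hence "real (k^i*p) \<le> real q" by (simp only: of_nat_le_iff)
      hence q1: "real (k^i*p) \<le> real q + 1" by simp
      have q2: "2^i * m p \<le> m q" using G[OF p, of i] m_mono[of "k^i*p" q] q by simp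
      have "real (k^i*p) * (2^i * m p) \<le> (real q + 1) * m q"
        using q1 q2 mpos[of p] by (intro mult_mono) auto
      moreover have "0 < real (k^i*p) * (2^i * m p)" using kpos mpos[of p] by simp
      ultimately show "aa q \<le> bd" unfolding aa_eq bd_def
        by (intro divide_left_mono) (auto intro: mult_pos_pos)
    qed
    hence "(\<Sum>q\<in>{k^i*p..<k^Suc i*p}. aa q) \<le> real (card {k^i*p..<k^Suc i*p}) * bd"
      by (intro sum_bounded_above) auto
    also have "\<dots> \<le> real (k^Suc i*p) * bd"
    proof (intro mult_right_mono)
      have "card {k^i*p..<k^Suc i*p} \<le> k^Suc i*p" by simp
      thus "real (card {k^i*p..<k^Suc i*p}) \<le> real (k^Suc i*p)" by (simp only: of_nat_le_iff)
      show "0 \<le> bd" using kpos mpos[of p] unfolding bd_def by simp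
    qed
    also have "\<dots> = real k / (2^i * m p)" unfolding bd_def using kpos mpos[of p] k p p01 by (simp add: field_simps)
    finally show ?thesis .
  qed
  have T: "(\<Sum>q\<in>{p..<k^n*p}. aa q) \<le> (2 * real k - 2 * real k / 2^n) / m p" if p: "p \<ge> p0" for n p
  proof (induction n)
    case 0 then show ?case by simp
  next
    case (Suc n)
    have le1: "p \<le> k^n*p" by (rule kip)
    have le2: "k^n*p \<le> k^Suc n*p" using k by simp
    have "(\<Sum>q\<in>{p..<k^Suc n*p}. aa q) = (\<Sum>q\<in>{p..<k^n*p}. aa q) + (\<Sum>q\<in>{k^n*p..<k^Suc n*p}. aa q)"
      using sum.atLeastLessThan_concat[OF le1 le2, of aa] by simp
    also have "\<dots> \<le> (2 * real k - 2 * real k / 2^n) / m p + real k / (2^n * m p)"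
      using Suc blk[OF p, of n] by linarith
    also have "\<dots> = (2 * real k - 2 * real k / 2^Suc n) / m p" using mpos[of p] by (simp add: field_simps)
    finally show ?case .
  qed
  have PS: "(\<Sum>j<L. aa (p+j)) \<le> 2 * real k / m p" if p: "p \<ge> p0" for L p
  proof -
    have "p + L < 2^(p+L)" by (rule less_exp)
    also have "(2::nat)^(p+L) \<le> k^(p+L)" using k by (intro power_mono) auto
    also have "k^(p+L) \<le> k^(p+L) * p" using p p01 by simp
    finally have sub: "{p..<p+L} \<subseteq> {p..<k^(p+L)*p}" by auto
    have "(\<Sum>j<L. aa (p+j)) = (\<Sum>q\<in>{p..<p+L}. aa q)" by (rule sum_shift_ivl)
    also have "\<dots> \<le> (\<Sum>q\<in>{p..<k^(p+L)*p}. aa q)" using sub aa_pos by (intro sum_mono2) (auto simp: less_imp_le)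
    also have "\<dots> \<le> (2 * real k - 2 * real k / 2^(p+L)) / m p" by (rule T[OF p])
    also have "\<dots> \<le> 2 * real k / m p" using mpos[of p] kr by (intro divide_right_mono) auto
    finally show ?thesis .
  qed
  have smp: "summable (\<lambda>j. aa (p+j))" and sup: "(\<Sum>j. aa (p+j)) \<le> 2 * real k / m p" if p: "p \<ge> p0" for p
  proof -
    show sm: "summable (\<lambda>j. aa (p+j))" using PS[OF p] aa_pos by (intro summableI_nonneg_bounded) (auto simp: less_imp_le)
    show "(\<Sum>j. aa (p+j)) \<le> 2 * real k / m p" using PS[OF p] by (intro suminf_le_const[OF sm])
  qed
  have sm: "summable aa"
  proof -
    have "summable (\<lambda>j. aa (j+p0))" using smp[of p0] by (simp add: add.commute)
    thus ?thesis by simp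
  qed
  define S0 where "S0 = (\<Sum>q<p0. aa q)"
  have S0: "S0 \<ge> 0" unfolding S0_def using aa_pos by (intro sum_nonneg) (auto simp: less_imp_le)
  define B where "B = 2 * real k + S0 * m p0"
  have B0: "B > 0" unfolding B_def using kr S0 mpos[of p0] by (smt (verit) mult_nonneg_nonneg)
  have "(\<Sum>j. aa (p+j)) \<le> B / m p" for p
  proof (cases "p \<ge> p0")
    case True
    have "(\<Sum>j. aa (p+j)) \<le> 2 * real k / m p" by (rule sup[OF True])
    also have "\<dots> \<le> B / m p" unfolding B_def using S0 mpos[of p] mpos[of p0]
      by (intro divide_right_mono) auto
    finally show ?thesis .
  next
    case False
    define d where "d = p0 - p"
    have sp: "summable (\<lambda>j. aa (p+j))" using sm summable_ignore_initial_segment[OF sm, of p] by (simp add: add.commute)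
    have "(\<Sum>j. aa (p+j)) = (\<Sum>n. aa (p + (n + d))) + (\<Sum>i<d. aa (p + i))"
      by (rule suminf_split_initial_segment[OF sp])
    also have "(\<lambda>n. aa (p + (n + d))) = (\<lambda>n. aa (p0 + n))" using False unfolding d_def by (auto simp: algebra_simps)
    also have "(\<Sum>i<d. aa (p + i)) = (\<Sum>q\<in>{p..<p0}. aa q)" using sum_shift_ivl[where L=d and p=p and f=aa] False unfolding d_def by simp
    also have "(\<Sum>q\<in>{p..<p0}. aa q) \<le> S0" unfolding S0_def using aa_pos by (intro sum_mono2) (auto simp: less_imp_le)
    also have "(\<Sum>n. aa (p0 + n)) \<le> 2 * real k / m p0" by (rule sup) simp
    also have "2 * real k / m p0 + S0 = B / m p0" unfolding B_def using mpos[of p0] by (simp add: field_simps)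
    also have "B / m p0 \<le> B / m p" using B0 mpos[of p] m_mono[of p p0] False by (intro divide_left_mono) auto
    finally show ?thesis by simp
  qed
  thus ?thesis unfolding snq_unfold using sm B0 by blast
qed

end



lemma pw_inv_lt: fixes x y b :: real
  assumes "0 < x" "0 < y" "b > 0" "x powr b < y" shows "x < y powr (1/b)"
proof -
  have "x = (x powr b) powr (1/b)" using assms by (simp add: powr_powr)
  also have "\<dots> < y powr (1/b)" using assms by (intro powr_less_mono2) auto
  finally show ?thesis .
qed

lemma pw_inv_le: fixes x y b :: real
  assumes "0 < x" "0 < y" "b > 0" "x powr b \<le> y" shows "x \<le> y powr (1/b)"
proof -
  have "x = (x powr b) powr (1/b)" using assms by (simp add: powr_powr)
  also have "\<dots> \<le> y powr (1/b)" using assms by (intro powr_mono2) auto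
  finally show ?thesis .
qed

lemma pw_inv_gt: fixes x y b :: real
  assumes "0 < x" "0 < y" "b > 0" "y < x powr b" shows "y powr (1/b) < x"
proof -
  have "y powr (1/b) < (x powr b) powr (1/b)" using assms by (intro powr_less_mono2) auto
  also have "\<dots> = x" using assms by (simp add: powr_powr)
  finally show ?thesis .
qed

lemma pw_inv_ge: fixes x y b :: real
  assumes "0 < x" "0 < y" "b > 0" "y \<le> x powr b" shows "y powr (1/b) \<le> x"
proof -
  have "y powr (1/b) \<le> (x powr b) powr (1/b)" using assms by (intro powr_mono2) auto
  also have "\<dots> = x" using assms by (simp add: powr_powr)
  finally show ?thesis .
qed

lemma powr_div_split: fixes l D c :: real
  assumes "0 < l" "0 < D" shows "(l/D) powr c = D powr (-c) * l powr c"
proof -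
  have "(l/D) powr c = l powr c / D powr c" using assms by (intro powr_divide)
  also have "\<dots> = D powr (-c) * l powr c" by (simp add: powr_minus divide_inverse)
  finally show ?thesis .
qed

context wseq
begin

abbreviation nu where "nu \<equiv> nu_m m"

lemma nu_pos: "t \<ge> m 0 \<Longrightarrow> nu t > 0" unfolding nu_Nn using Nn_pos[of t] by simp

lemma nu_eventually_pos: "\<forall>t\<ge>m 0. nu t > 0" using nu_pos by blast
lemma g_eventually_pos: "\<forall>x\<ge>0. g x > 0" using g_pos by blast

lemma L1: assumes "b \<in> Bset g" "b > 0" shows "1/b \<in> Aset nu"
proof -
  obtain D k0 where D: "D > 0" "\<forall>k j. k0 \<le> k \<longrightarrow> k \<le> j \<longrightarrow> m j \<ge> D * ((real j+1)/(real k+1)) powr b * m k"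
    using Bset_BIe[OF assms(1)] unfolding BIe_def by blast
  define C where "C = max 1 (2 * D powr (-(1/b)))"
  define t0 where "t0 = max (m k0) (m 0)"
  have t0: "t0 > 0" unfolding t0_def using mpos[of 0] by simp
  have "nu (l*t) \<le> C * l powr (1/b) * nu t" if t: "t \<ge> t0" and l: "l \<ge> 1" for t l
  proof -
    define p where "p = Nn t"
    define q where "q = Nn (l*t)"
    have tpos: "t > 0" using t t0 by simp
    have pk: "k0 < p" unfolding p_def using Nn_ge[of k0 t] t unfolding t0_def by simp
    have p1: "p \<ge> 1" using pk by simp
    have pq: "p \<le> q" unfolding p_def q_def using l tpos by (intro Nn_mono) simp
    have C1: "C \<ge> 1" unfolding C_def by simp
    have lb: "l powr (1/b) \<ge> 1" using l assms(2) by (simp add: ge_one_powr_ge_zero)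
    have "real q \<le> C * l powr (1/b) * real p"
    proof (cases "q = p")
      case True
      have "real p \<le> 1 * 1 * real p" by simp
      also have "\<dots> \<le> C * l powr (1/b) * real p" using C1 lb by (intro mult_right_mono mult_mono) auto
      finally show ?thesis using True by simp
    next
      case False
      hence pq': "p < q" using pq by simp
      have mq: "m (q - 1) \<le> l * t" unfolding q_def using Nn_iff[of "q-1" "l*t"] pq' unfolding q_def by simp
      have mp: "t < m p" unfolding p_def by (rule m_Nn_gt)
      have "m (q-1) \<ge> D * ((real (q-1)+1)/(real p+1)) powr b * m p" by (rule D(2)[rule_format]) (use pk pq' in auto)
      moreover have "real (q-1) + 1 = real q" using pq' by (simp add: of_nat_diff)
      ultimately have "D * (real q/(real p+1)) powr b * m p \<le> l * t" using mq by simp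
      moreover have "D * (real q/(real p+1)) powr b * t < D * (real q/(real p+1)) powr b * m p"
        using mp D pq' by (intro mult_strict_left_mono) auto
      ultimately have "D * (real q/(real p+1)) powr b * t < l * t" by linarith
      hence "D * (real q/(real p+1)) powr b < l" using tpos by simp
      hence "(real q/(real p+1)) powr b < l / D" using D by (simp add: field_simps)
      hence "real q/(real p+1) < (l/D) powr (1/b)" using pq' D l assms(2) by (intro pw_inv_lt) auto
      also have "\<dots> = D powr (-(1/b)) * l powr (1/b)" using D l by (intro powr_div_split) auto
      finally have "real q < D powr (-(1/b)) * l powr (1/b) * (real p + 1)" by (simp add: field_simps)
      also have "\<dots> \<le> D powr (-(1/b)) * l powr (1/b) * (2 * real p)" using p1 by (intro mult_left_mono) auto
      also have "\<dots> = (2 * D powr (-(1/b))) * l powr (1/b) * real p" by simp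
      also have "\<dots> \<le> C * l powr (1/b) * real p" unfolding C_def by (intro mult_right_mono) auto
      finally show ?thesis by simp
    qed
    thus ?thesis unfolding nu_Nn p_def q_def .
  qed
  moreover have "C > 0" unfolding C_def by simp
  ultimately show ?thesis unfolding Aset_def using t0 by blast
qed

lemma L2: assumes "a \<in> Aset g" "a > 0" shows "1/a \<in> Bset nu"
proof -
  obtain C k0 where C: "C > 0" "\<forall>k j. k0 \<le> k \<longrightarrow> k \<le> j \<longrightarrow> m j \<le> C * ((real j+1)/(real k+1)) powr a * m k"
    using Aset_AIe[OF assms(1)] unfolding AIe_def by blast
  define D where "D = C powr (-(1/a)) / 2"
  define t0 where "t0 = max (m (k0+1)) (m 0)"
  have t0: "t0 > 0" unfolding t0_def using mpos[of 0] by simp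
  have "nu (l*t) \<ge> D * l powr (1/a) * nu t" if t: "t \<ge> t0" and l: "l \<ge> 1" for t l
  proof -
    define p where "p = Nn t"
    define q where "q = Nn (l*t)"
    have tpos: "t > 0" using t t0 by simp
    have pk: "k0 + 1 < p" unfolding p_def using Nn_ge[of "k0+1" t] t unfolding t0_def by simp
    have pq: "p \<le> q" unfolding p_def q_def using l tpos by (intro Nn_mono) simp
    have mq: "l * t < m q" unfolding q_def by (rule m_Nn_gt)
    have mp: "m (p - 1) \<le> t" unfolding p_def using m_Nn_le[of t] pk unfolding p_def by simp
    have mp0: "m (p-1) > 0" by (rule mpos)
    have "m q \<le> C * ((real q+1)/(real (p-1)+1)) powr a * m (p-1)"
      by (rule C(2)[rule_format]) (use pk pq in auto)
    moreover have "real (p-1) + 1 = real p" using pk by (simp add: of_nat_diff)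
    ultimately have "m q \<le> C * ((real q+1)/real p) powr a * m (p-1)" by simp
    moreover have "l * m (p-1) \<le> l * t" using mp l by simp
    ultimately have "l * m (p-1) < C * ((real q+1)/real p) powr a * m (p-1)" using mq by linarith
    hence "l < C * ((real q+1)/real p) powr a" using mp0 by simp
    hence "l / C < ((real q+1)/real p) powr a" using C by (simp add: field_simps)
    hence "(l/C) powr (1/a) < (real q+1)/real p" using pk l C assms(2) by (intro pw_inv_gt) auto
    hence "C powr (-(1/a)) * l powr (1/a) < (real q+1)/real p" using C l by (simp add: powr_div_split)
    hence "real p * (C powr (-(1/a)) * l powr (1/a)) < real q + 1" using pk by (simp add: field_simps)
    moreover have "real q + 1 \<le> 2 * real q" using pk pq by simp
    ultimately have "D * l powr (1/a) * real p \<le> real q" unfolding D_def by (simp add: field_simps)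
    thus ?thesis unfolding nu_Nn p_def q_def .
  qed
  moreover have "D > 0" unfolding D_def using C by simp
  ultimately show ?thesis unfolding Bset_def using t0 by blast
qed

lemma L3: assumes "a \<in> Aset nu" "a > 0" shows "1/a \<in> Bset g"
proof -
  obtain C t0 where C: "C > 0" "t0 > 0" "\<forall>t\<ge>t0. \<forall>l\<ge>1. nu (l*t) \<le> C * l powr a * nu t"
    using assms unfolding Aset_def by blast
  obtain k0 where k0: "m k0 > 2 * t0" using m_unbounded by blast
  define D where "D = (C * 2 powr a) powr (-(1/a))"
  have "m j \<ge> D * ((real j+1)/(real k+1)) powr (1/a) * m k" if k: "k0 \<le> k" "k \<le> j" for k j
  proof -
    have mk: "m k > 2 * t0" using k0 m_mono[OF k(1)] by simp
    have mkj: "m k \<le> m j" using m_mono k by simp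
    define t where "t = m k / 2"
    define l where "l = 2 * m j / m k"
    have tt: "t \<ge> t0" unfolding t_def using mk by simp
    have ll: "l \<ge> 1" unfolding l_def using mkj mpos[of k] by (simp add: field_simps)
    have lt: "l * t = m j" unfolding l_def t_def using mpos[of k] by simp
    have n1: "real (Nn t) \<le> real k" using Nn_le[of t k] mpos[of k] unfolding t_def by simp
    have n2: "real j + 1 \<le> real (Nn (m j))" using Nn_ge[of j "m j"] by simp
    have "real j + 1 \<le> C * l powr a * real k" using C(3)[rule_format, OF tt ll] n1 n2 C(1) lt unfolding nu_Nn
      by (smt (verit, best) mult_left_mono powr_ge_zero mult_nonneg_nonneg)
    also have "\<dots> \<le> C * l powr a * (real k + 1)" using C(1) by (intro mult_left_mono) auto
    finally have h0: "(real j+1) \<le> C * l powr a * (real k + 1)" .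
    define r where "r = (real j+1)/(real k+1)"
    have rr: "real j + 1 = r * (real k + 1)" unfolding r_def by simp
    have "r * (real k + 1) \<le> (C * l powr a) * (real k + 1)" using h0 rr by simp
    hence "r \<le> C * l powr a" by (rule mult_right_le_imp_le) simp
    also have "l powr a = 2 powr a * (m j / m k) powr a" unfolding l_def using mpos[of j] mpos[of k]
      by (simp add: powr_mult[symmetric] mult.assoc)
    finally have "r \<le> (m j / m k) powr a * (C * 2 powr a)" by (simp add: mult_ac)
    hence "r / (C * 2 powr a) \<le> (m j / m k) powr a"
      using C(1) by (subst pos_divide_le_eq) auto
    hence "((real j+1)/(real k+1)) / (C * 2 powr a) \<le> (m j / m k) powr a" unfolding r_def .
    hence "(((real j+1)/(real k+1)) / (C * 2 powr a)) powr (1/a) \<le> m j / m k"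
      using C(1) mpos[of j] mpos[of k] assms(2) by (intro pw_inv_ge) auto
    moreover have "(((real j+1)/(real k+1)) / (C * 2 powr a)) powr (1/a) = D * ((real j+1)/(real k+1)) powr (1/a)"
      unfolding D_def using C(1) by (intro powr_div_split) auto
    ultimately show ?thesis using mpos[of k] by (simp add: field_simps)
  qed
  hence "BIe (1/a)" unfolding BIe_def using C(1) unfolding D_def by (intro exI[of _ D]) (auto simp: D_def)
  thus ?thesis using assms(2) by (intro BIe_Bset) auto
qed

lemma L4: assumes "b \<in> Bset nu" "b > 0" shows "1/b \<in> Aset g"
proof -
  obtain D t0 where D: "D > 0" "t0 > 0" "\<forall>t\<ge>t0. \<forall>l\<ge>1. nu (l*t) \<ge> D * l powr b * nu t"
    using assms unfolding Bset_def by blast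
  obtain k0 where k0: "m k0 > t0" using m_unbounded by blast
  define C where "C = 2 * max 1 (D powr (-(1/b)))"
  have "m j \<le> C * ((real j+1)/(real k+1)) powr (1/b) * m k" if k: "k0 \<le> k" "k \<le> j" for k j
  proof -
    have mk: "m k > t0" using k0 m_mono[OF k(1)] by simp
    have r1: "(real j+1)/(real k+1) \<ge> 1" using k by simp
    have rp: "((real j+1)/(real k+1)) powr (1/b) \<ge> 1" using r1 assms(2) by (simp add: ge_one_powr_ge_zero)
    show ?thesis
    proof (cases "m j \<ge> 2 * m k")
      case False
      have "m j \<le> 2 * 1 * m k" using False by simp
      also have "\<dots> \<le> C * ((real j+1)/(real k+1)) powr (1/b) * m k"
        unfolding C_def using rp mpos[of k] by (intro mult_right_mono mult_mono) auto
      finally show ?thesis .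
    next
      case True
      define l where "l = m j / (2 * m k)"
      have ll: "l \<ge> 1" unfolding l_def using True mpos[of k] by (simp add: field_simps)
      have lt: "l * m k = m j / 2" unfolding l_def using mpos[of k] by simp
      have n1: "real (Nn (m j / 2)) \<le> real j" using Nn_le[of "m j / 2" j] mpos[of j] by simp
      have n2: "real k + 1 \<le> real (Nn (m k))" using Nn_ge[of k "m k"] by simp
      have "D * l powr b * (real k + 1) \<le> D * l powr b * real (Nn (m k))" using n2 D(1) by (intro mult_left_mono) auto
      also have "\<dots> \<le> real (Nn (m j / 2))" using D(3)[rule_format, of "m k" l] mk ll lt unfolding nu_Nn by simp
      also have "\<dots> \<le> real j + 1" using n1 by simp
      finally have h0: "D * l powr b * (real k + 1) \<le> real j + 1" .
      define r where "r = (real j+1)/(real k+1)"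
      have rr: "real j + 1 = r * (real k + 1)" unfolding r_def by simp
      have "(D * l powr b) * (real k + 1) \<le> r * (real k + 1)" using h0 rr by simp
      hence "D * l powr b \<le> r" by (rule mult_right_le_imp_le) simp
      hence "l powr b * D \<le> r" by (simp add: mult_ac)
      hence "l powr b \<le> r / D" using D(1) by (subst pos_le_divide_eq) auto
      hence "l powr b \<le> ((real j+1)/(real k+1)) / D" unfolding r_def .
      hence "l \<le> (((real j+1)/(real k+1)) / D) powr (1/b)"
        using ll D(1) assms(2) r1 by (intro pw_inv_le) auto
      also have "\<dots> = D powr (-(1/b)) * ((real j+1)/(real k+1)) powr (1/b)"
        using D(1) r1 by (intro powr_div_split) auto
      finally have "m j / (2 * m k) \<le> D powr (-(1/b)) * ((real j+1)/(real k+1)) powr (1/b)" unfolding l_def .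
      hence "m j \<le> 2 * D powr (-(1/b)) * ((real j+1)/(real k+1)) powr (1/b) * m k"
        using mpos[of k] by (simp add: field_simps)
      also have "\<dots> \<le> C * ((real j+1)/(real k+1)) powr (1/b) * m k"
        unfolding C_def using mpos[of k] by (intro mult_right_mono) auto
      finally show ?thesis .
    qed
  qed
  hence "AIe (1/b)" unfolding AIe_def unfolding C_def by (intro exI[of _ C]) (auto simp: C_def)
  thus ?thesis using assms(2) by (intro AIe_Aset) auto
qed

end



lemma pow_fact_bound: "(real N + 1) ^ N \<le> exp (real N) * fact N"
proof (induction N)
  case 0 then show ?case by simp
next
  case (Suc N)
  define x where "x = 1 / (real N + 1)"
  have x0: "x \<ge> 0" unfolding x_def by simp
  have e1: "(1 + x) ^ Suc N \<le> exp x ^ Suc N" using x0 by (intro power_mono) auto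
  have sx: "real (Suc N) * x = 1" unfolding x_def by simp
  have e2: "exp x ^ Suc N = exp 1" by (simp only: exp_of_nat_mult[symmetric] sx)
  have e3: "(real N + 2) = (1 + x) * (real N + 1)" unfolding x_def by (simp add: field_simps)
  have "(real (Suc N) + 1) ^ Suc N = (1 + x) ^ Suc N * ((real N + 1) * (real N + 1) ^ N)"
    using e3 by (simp add: power_mult_distrib add.commute)
  also have "\<dots> \<le> exp 1 * ((real N + 1) * (exp (real N) * fact N))"
    using e1 e2 Suc x0 by (intro mult_mono) auto
  also have "\<dots> = exp (real (Suc N)) * fact (Suc N)" by (simp add: exp_add[symmetric] add.commute mult_ac)
  finally show ?case .
qed

lemma sum_ln_bound: "(\<Sum>j<N. ln ((real N + 1) / (real j + 1))) \<le> real N"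
proof -
  have "(\<Sum>j<N. ln ((real N + 1) / (real j + 1))) = ln (\<Prod>j<N. (real N + 1) / (real j + 1))"
    by (subst ln_prod) auto
  also have "(\<Prod>j<N. (real N + 1) / (real j + 1)) = (real N + 1) ^ N / fact N"
  proof -
    have "(\<Prod>j<N. (real j + 1)) = fact N" by (simp add: fact_prod_Suc add.commute atLeast0LessThan)
    thus ?thesis by (simp add: prod_dividef)
  qed
  also have "ln ((real N + 1) ^ N / fact N) \<le> ln (exp (real N))"
    using pow_fact_bound[of N] by (subst ln_le_cancel_iff) (auto simp: divide_le_eq)
  finally show ?thesis by simp
qed

context wseq
begin

abbreviation om where "om \<equiv> omegaM M"

definition EQV where "EQV \<longleftrightarrow> (\<exists>c>0. \<exists>C>0. \<exists>T. \<forall>t\<ge>T. c * om t \<le> nu t \<and> nu t \<le> C * om t)"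

lemma om_eventually_pos: "\<forall>t\<ge>m 0 + 1. om t > 0" using omega_pos by simp

lemma omega_le_nu: assumes "AIg a" "a \<ge> 0" shows "\<exists>C'>0. \<forall>t\<ge>m 0. om t \<le> C' * nu t"
proof -
  obtain C where C: "C > 0" "\<forall>k j. k \<le> j \<longrightarrow> m j \<le> C * ((real j+1)/(real k+1)) powr a * m k"
    using assms unfolding AIg_def by blast
  define C' where "C' = \<bar>ln C\<bar> + a + 1"
  have "om t \<le> C' * nu t" if t: "t \<ge> m 0" for t
  proof -
    define N where "N = Nn t"
    have tpos: "t > 0" using t mpos[of 0] by linarith
    have tN: "t < m N" unfolding N_def by (rule m_Nn_gt)
    have trm: "ln (t / m j) \<le> ln C + a * ln ((real N + 1) / (real j + 1))" if j: "j < N" for j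
    proof -
      have "ln (t / m j) \<le> ln (m N / m j)" using tN tpos mpos[of j] by (simp add: divide_strict_right_mono less_imp_le)
      also have "m N / m j \<le> C * ((real N+1)/(real j+1)) powr a"
        using C(2)[rule_format, of j N] j mpos[of j] by (simp add: divide_le_eq)
      hence "ln (m N / m j) \<le> ln (C * ((real N+1)/(real j+1)) powr a)"
        using mpos[of j] mpos[of N] C(1) by (subst ln_le_cancel_iff) auto
      also have "\<dots> = ln C + a * ln ((real N + 1) / (real j + 1))" using C(1) by (simp add: ln_mult ln_powr)
      finally show ?thesis .
    qed
    have "om t = (\<Sum>j<N. ln (t / m j))" unfolding omega_eq[OF tpos] Fs_def N_def ..
    also have "\<dots> \<le> (\<Sum>j<N. ln C + a * ln ((real N + 1) / (real j + 1)))" using trm by (intro sum_mono) auto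
    also have "\<dots> = real N * ln C + a * (\<Sum>j<N. ln ((real N + 1) / (real j + 1)))" by (simp add: sum.distrib sum_distrib_left)
    also have "\<dots> \<le> real N * \<bar>ln C\<bar> + a * real N" using sum_ln_bound[of N] assms(2)
      by (intro add_mono mult_left_mono) auto
    also have "\<dots> \<le> C' * real N" unfolding C'_def by (simp add: algebra_simps)
    finally show ?thesis unfolding nu_Nn N_def .
  qed
  moreover have "C' > 0" unfolding C'_def using assms(2) by simp
  ultimately show ?thesis by blast
qed

lemma nu_le_omega: assumes "a \<in> Aset nu" shows "\<exists>C'>0. \<exists>T. \<forall>t\<ge>T. nu t \<le> C' * om t"
proof -
  obtain C t0 where C: "C > 0" "t0 > 0" "\<forall>t\<ge>t0. \<forall>l\<ge>1. nu (l*t) \<le> C * l powr a * nu t"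
    using assms unfolding Aset_def by blast
  define C' where "C' = C * exp 1 powr a"
  have "nu t \<le> C' * om t" if t: "t \<ge> exp 1 * t0" for t
  proof -
    define s where "s = t / exp 1"
    have s: "s \<ge> t0" unfolding s_def using t by (simp add: field_simps)
    have spos: "s > 0" using s C(2) by simp
    have ts: "exp 1 * s = t" unfolding s_def by simp
    have "nu t \<le> C * exp 1 powr a * nu s" using C(3)[rule_format, OF s, of "exp 1"] ts by simp
    also have "nu s \<le> om t"
    proof -
      have "om (exp 1 * s) \<ge> om s + real (Nn s) * ln (exp 1)" by (rule W1[OF spos]) simp
      thus ?thesis using omega_nonneg[OF spos] ts unfolding nu_Nn by simp
    qed
    hence "C * exp 1 powr a * nu s \<le> C * exp 1 powr a * om t" using C(1) by (intro mult_left_mono) auto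
    finally show ?thesis unfolding C'_def .
  qed
  moreover have "C' > 0" unfolding C'_def using C by simp
  ultimately show ?thesis by blast
qed

lemma EQV_intro: assumes "AIg a" "a \<ge> 0" "a' \<in> Aset nu" shows EQV
proof -
  obtain C1 where C1: "C1 > 0" "\<forall>t\<ge>m 0. om t \<le> C1 * nu t" using omega_le_nu[OF assms(1,2)] by blast
  obtain C2 T where C2: "C2 > 0" "\<forall>t\<ge>T. nu t \<le> C2 * om t" using nu_le_omega[OF assms(3)] by blast
  have "\<forall>t\<ge>max T (m 0). (1/C1) * om t \<le> nu t \<and> nu t \<le> C2 * om t"
    using C1 C2 by (auto simp: field_simps)
  moreover have "1/C1 > 0" using C1 by simp
  ultimately show ?thesis unfolding EQV_def using C2(1) by blast
qed

lemma EQV_sets: assumes EQV shows "Aset om = Aset nu" "Bset om = Bset nu"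
proof -
  obtain c C T where cC: "c > 0" "C > 0" "\<forall>t\<ge>T. c * om t \<le> nu t \<and> nu t \<le> C * om t"
    using assms unfolding EQV_def by blast
  have b1: "\<forall>t\<ge>T. c * om t \<le> nu t \<and> nu t \<le> C * om t" using cC by blast
  have b2: "\<forall>t\<ge>T. (1/C) * nu t \<le> om t \<and> om t \<le> (1/c) * nu t"
    using cC by (auto simp: field_simps mult.commute)
  show "Aset om = Aset nu"
    using Aset_equiv_sub[OF om_eventually_pos cC(1) b1] Aset_equiv_sub[OF nu_eventually_pos _ b2] cC(2) by auto
  show "Bset om = Bset nu"
    using Bset_equiv_sub[OF om_eventually_pos cC(1) b1] Bset_equiv_sub[OF nu_eventually_pos _ b2] cC(2) by auto
qed

lemma EQV_nu_sets: assumes EQV shows "\<exists>a. a \<in> Aset nu" "\<exists>b>0. b \<in> Bset nu"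
proof -
  obtain c C T0 where cC: "c > 0" "C > 0" "\<forall>t\<ge>T0. c * om t \<le> nu t \<and> nu t \<le> C * om t"
    using assms unfolding EQV_def by blast
  define T where "T = max T0 (m 0 + 1)"
  have T: "T > 0" unfolding T_def using mpos[of 0] by simp
  have bd: "c * om t \<le> nu t" "nu t \<le> C * om t" "om t > 0" if "t \<ge> T" for t
    using cC(3) that om_eventually_pos unfolding T_def by auto
  have ommono: "om (l*x) \<ge> om x" if "x \<ge> T" "l \<ge> 1" for x l
    using omega_mono[of x "l*x"] that T by simp
  define L where "L = exp (1/c)"
  define b where "b = c * ln 2"
  have L1: "L > 1" unfolding L_def using cC by simp
  have Lb: "L powr b = 2" unfolding L_def b_def powr_def using cC by simp
  have b0: "b > 0" unfolding b_def using cC by simp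
  have step1: "om (L*y) \<ge> L powr b * om y" if y: "y \<ge> T" for y
  proof -
    have "om (L*y) \<ge> om y + real (Nn y) * ln L" using W1[of y L] y T L1 by simp
    moreover have "real (Nn y) * ln L \<ge> c * om y * (1/c)" using bd[OF y] unfolding nu_Nn L_def
      using cC(1) by (intro mult_mono) auto
    ultimately show ?thesis using Lb cC(1) by simp
  qed
  have lowb: "\<forall>x\<ge>T. \<forall>l\<ge>1. om (l*x) \<ge> (1/2) * l powr b * om x"
  proof (rule iter_lower[OF L1 T])
    show "\<forall>x\<ge>T. \<forall>l. 1 \<le> l \<and> l \<le> L \<longrightarrow> (1/2) * l powr b * om x \<le> om (l*x)"
    proof (intro allI impI)
      fix x l assume x: "x \<ge> T" and l: "1 \<le> l \<and> l \<le> L"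
      have "l powr b \<le> L powr b" using l b0 by (intro powr_mono2) auto
      hence "(1/2) * l powr b \<le> 1" using Lb by simp
      hence "(1/2) * l powr b * om x \<le> om x" using bd(3)[OF x] by (simp add: mult_le_cancel_right1)
      also have "\<dots> \<le> om (l*x)" using ommono x l by simp
      finally show "(1/2) * l powr b * om x \<le> om (l*x)" .
    qed
    show "\<forall>y\<ge>T. L powr b * om y \<le> om (L*y)" using step1 by blast
  qed
  have "nu (l*x) \<ge> (c/(2*C)) * l powr b * nu x" if x: "x \<ge> T" and l: "l \<ge> 1" for x l
  proof -
    have lx: "l * x \<ge> T" using x l T by (smt (verit) mult_le_cancel_right1)
    have "(c/(2*C)) * l powr b * nu x \<le> (c/(2*C)) * l powr b * (C * om x)"
      using bd(2)[OF x] cC by (intro mult_left_mono) auto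
    also have "\<dots> = c * ((1/2) * l powr b * om x)" using cC by (simp add: field_simps)
    also have "\<dots> \<le> c * om (l*x)" using lowb x l cC by (intro mult_left_mono) auto
    also have "\<dots> \<le> nu (l*x)" using bd(1)[OF lx] .
    finally show ?thesis .
  qed
  moreover have "c/(2*C) > 0" using cC by simp
  ultimately have "b \<in> Bset nu" unfolding Bset_def using T by blast
  thus "\<exists>b>0. b \<in> Bset nu" using b0 by blast
  define L2 where "L2 = exp (1/(2*C))"
  define a where "a = 2 * C * ln 2"
  have L21: "L2 > 1" unfolding L2_def using cC by simp
  have La: "L2 powr a = 2" unfolding L2_def a_def powr_def using cC by simp
  have a0: "a > 0" unfolding a_def using cC by simp
  have step2: "om (L2*y) \<le> L2 powr a * om y" if y: "y \<ge> T" for y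
  proof -
    have yy: "L2 * y \<ge> T" using y L21 T by (smt (verit) mult_le_cancel_right1)
    have "om (L2*y) \<le> om y + real (Nn (L2*y)) * ln L2" using W2[of y L2] y T L21 by simp
    moreover have "real (Nn (L2*y)) * ln L2 \<le> (C * om (L2*y)) * (1/(2*C))"
    proof -
      have lnL2: "ln L2 = 1/(2*C)" unfolding L2_def by simp
      have "real (Nn (L2*y)) * (1/(2*C)) \<le> (C * om (L2*y)) * (1/(2*C))"
        using bd(2)[OF yy] cC unfolding nu_Nn by (intro mult_right_mono) auto
      thus ?thesis unfolding lnL2 .
    qed
    ultimately have "om (L2*y) \<le> om y + om (L2*y) / 2" using cC by simp
    thus ?thesis using La by simp
  qed
  have upb: "\<forall>x\<ge>T. \<forall>l\<ge>1. om (l*x) \<le> 2 * l powr a * om x"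
  proof (rule iter_upper[OF L21 T])
    show "\<forall>x\<ge>T. \<forall>l. 1 \<le> l \<and> l \<le> L2 \<longrightarrow> om (l*x) \<le> 2 * l powr a * om x"
    proof (intro allI impI)
      fix x l assume x: "x \<ge> T" and l: "1 \<le> l \<and> l \<le> L2"
      have "om (l*x) \<le> om (L2*x)" using omega_mono[of "l*x" "L2*x"] l x T by (simp add: mult_right_mono)
      also have "\<dots> \<le> 2 * om x" using step2[OF x] La by simp
      also have "\<dots> \<le> 2 * l powr a * om x" using l a0 bd(3)[OF x] ge_one_powr_ge_zero[of l a]
        by (simp add: mult_le_cancel_right1)
      finally show "om (l*x) \<le> 2 * l powr a * om x" .
    qed
    show "\<forall>y\<ge>T. om (L2*y) \<le> L2 powr a * om y" using step2 by blast
  qed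
  have "nu (l*x) \<le> (2*C/c) * l powr a * nu x" if x: "x \<ge> T" and l: "l \<ge> 1" for x l
  proof -
    have lx: "l * x \<ge> T" using x l T by (smt (verit) mult_le_cancel_right1)
    have "nu (l*x) \<le> C * om (l*x)" using bd(2)[OF lx] .
    also have "\<dots> \<le> C * (2 * l powr a * om x)" using upb x l cC by (intro mult_left_mono) auto
    also have "\<dots> = (2*C/c) * l powr a * (c * om x)" using cC by (simp add: field_simps)
    also have "\<dots> \<le> (2*C/c) * l powr a * nu x" using bd(1)[OF x] cC by (intro mult_left_mono) auto
    finally show ?thesis .
  qed
  moreover have "2*C/c > 0" using cC by simp
  ultimately have "a \<in> Aset nu" unfolding Aset_def using T by blast
  thus "\<exists>a. a \<in> Aset nu" by blast
qed

lemma om_sets_EQV: assumes "a \<in> Aset om" "b \<in> Bset om" "b > 0" shows EQV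
proof -
  obtain C t1 where C: "C > 0" "t1 > 0" "\<forall>t\<ge>t1. \<forall>l\<ge>1. om (l*t) \<le> C * l powr a * om t"
    using assms unfolding Aset_def by blast
  obtain D t2 where D: "D > 0" "t2 > 0" "\<forall>t\<ge>t2. \<forall>l\<ge>1. om (l*t) \<ge> D * l powr b * om t"
    using assms unfolding Bset_def by blast
  define L where "L = (2/D) powr (1/b) + 1"
  have L1: "L > 1" unfolding L_def using D by simp
  have LD: "D * L powr b \<ge> 2"
  proof -
    have "2/D = ((2/D) powr (1/b)) powr b" using D assms(3) by (simp add: powr_powr)
    also have "\<dots> \<le> L powr b" unfolding L_def using D assms(3) by (intro powr_mono2) auto
    finally show ?thesis using D by (simp add: field_simps)
  qed
  define T where "T = max (L * t2) (max t1 (m 0 + 1))"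
  have upper: "nu t \<le> (C * exp 1 powr a) * om t" if t: "t \<ge> T" for t
  proof -
    have tpos: "t > 0" using t mpos[of 0] unfolding T_def by linarith
    have "om (exp 1 * t) \<ge> om t + real (Nn t) * ln (exp 1)" by (rule W1[OF tpos]) simp
    hence "nu t \<le> om (exp 1 * t)" using omega_nonneg[OF tpos] unfolding nu_Nn by simp
    also have "\<dots> \<le> C * exp 1 powr a * om t" using C(3) t unfolding T_def by simp
    finally show ?thesis .
  qed
  have lower: "(1/(2 * ln L)) * om t \<le> nu t" if t: "t \<ge> T" for t
  proof -
    define s where "s = t / L"
    have s: "s \<ge> t2" unfolding s_def using t L1 unfolding T_def by (simp add: field_simps)
    have spos: "s > 0" using s D(2) by simp
    have ts: "L * s = t" unfolding s_def using L1 by simp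
    have "om t \<ge> D * L powr b * om s" using D(3)[rule_format, OF s, of L] L1 ts by simp
    moreover have "D * L powr b * om s \<ge> 2 * om s" using LD omega_nonneg[OF spos] by (simp add: mult_right_mono)
    ultimately have h1: "om s \<le> om t / 2" by simp
    have "om t \<le> om s + real (Nn t) * ln L" using W2[OF spos, of L] L1 ts by simp
    hence "om t \<le> 2 * (real (Nn t) * ln L)" using h1 by linarith
    hence "om t \<le> 2 * ln L * nu t" unfolding nu_Nn by (simp add: mult_ac)
    moreover have "ln L > 0" using L1 by simp
    ultimately show ?thesis by (simp add: field_simps)
  qed
  have "\<forall>t\<ge>T. (1/(2 * ln L)) * om t \<le> nu t \<and> nu t \<le> (C * exp 1 powr a) * om t"
    using upper lower by blast
  moreover have "1/(2 * ln L) > 0" using L1 by simp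
  moreover have "C * exp 1 powr a > 0" using C by simp
  ultimately show ?thesis unfolding EQV_def by blast
qed

end




lemma alpha_fin_iff: assumes pos: "\<forall>x\<ge>x1. f x > 0"
  shows "alpha_idx f < \<infinity> \<longleftrightarrow> (\<exists>a. a \<in> Aset f)"
proof
  assume "alpha_idx f < \<infinity>"
  hence "Inf (ereal ` Aset f) < \<infinity>" using alpha_idx_Aset[OF pos] by simp
  show "\<exists>a. a \<in> Aset f"
  proof (rule ccontr)
    assume "\<not> (\<exists>a. a \<in> Aset f)"
    hence "Aset f = {}" by blast
    hence "Inf (ereal ` Aset f) = \<infinity>" by (simp add: top_ereal_def)
    thus False using \<open>Inf (ereal ` Aset f) < \<infinity>\<close> by simp
  qed
next
  assume "\<exists>a. a \<in> Aset f"
  then obtain a where "a \<in> Aset f" by blast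
  hence "Inf (ereal ` Aset f) \<le> ereal a" by (simp add: Inf_lower)
  moreover have "ereal a < \<infinity>" by simp
  ultimately have "Inf (ereal ` Aset f) < \<infinity>" by (rule order.strict_trans1)
  thus "alpha_idx f < \<infinity>" using alpha_idx_Aset[OF pos] by simp
qed

lemma beta_pos_iff: assumes pos: "\<forall>x\<ge>x1. f x > 0"
  shows "beta_idx f > 0 \<longleftrightarrow> (\<exists>b>0. b \<in> Bset f)"
proof
  assume "beta_idx f > 0"
  hence "0 < Sup (ereal ` Bset f)" using beta_idx_Bset[OF pos] by simp
  hence "\<exists>z\<in>ereal ` Bset f. 0 < z" by (simp add: less_Sup_iff)
  then obtain b where "b \<in> Bset f" "0 < ereal b" by blast
  thus "\<exists>b>0. b \<in> Bset f" by auto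
next
  assume "\<exists>b>0. b \<in> Bset f"
  then obtain b where "b > 0" "b \<in> Bset f" by blast
  hence "ereal b \<le> Sup (ereal ` Bset f)" by (simp add: Sup_upper)
  moreover have "(0::ereal) < ereal b" using \<open>b > 0\<close> by simp
  ultimately have "0 < Sup (ereal ` Bset f)" by (rule order.strict_trans2[rotated])
  thus "beta_idx f > 0" using beta_idx_Bset[OF pos] by simp
qed

context wseq
begin

lemma log_convex_M: "log_convex M" using ws unfolding weight_seq_def log_convex_def by blast

lemma SR_iff: "strongly_regular M \<longleftrightarrow> DB \<and> SQ"
  unfolding strongly_regular_def using log_convex_M mg_DB DB_mg snq_SQ SQ_snq by blast

lemma Ag_iff: "(\<exists>a. a \<in> Aset g) \<longleftrightarrow> DB"
proof
  assume "\<exists>a. a \<in> Aset g"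
  thus DB using Aset_AIe AIe_DB by blast
next
  assume DB
  then obtain a where "a \<ge> 0" "AIg a" using DB_AIg by blast
  thus "\<exists>a. a \<in> Aset g" using AIg_AIe AIe_Aset by blast
qed

lemma Bg_iff: "(\<exists>b>0. b \<in> Bset g) \<longleftrightarrow> SQ"
proof
  assume "\<exists>b>0. b \<in> Bset g"
  thus SQ using Bset_BIe BIe_SQ by blast
next
  assume SQ
  then obtain b where "b > 0" "BIe b" using SQ_BIe by blast
  thus "\<exists>b>0. b \<in> Bset g" using BIe_Bset[of b] by auto
qed

lemma Ag_pos: assumes "a \<in> Aset g" shows "\<exists>a>0. a \<in> Aset g"
proof -
  have "max a 1 \<in> Aset g" using Aset_mono[OF g_eventually_pos assms, of "max a 1"] by simp
  moreover have "max a 1 > 0" by simp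
  ultimately show ?thesis by blast
qed

lemma Anu_pos: assumes "a \<in> Aset nu" shows "\<exists>a>0. a \<in> Aset nu"
proof -
  have "max a 1 \<in> Aset nu" using Aset_mono[OF nu_eventually_pos assms, of "max a 1"] by simp
  moreover have "max a 1 > 0" by simp
  ultimately show ?thesis by blast
qed

lemma nu_iff: "((\<exists>a. a \<in> Aset nu) \<and> (\<exists>b>0. b \<in> Bset nu)) \<longleftrightarrow> DB \<and> SQ"
proof
  assume h: "(\<exists>a. a \<in> Aset nu) \<and> (\<exists>b>0. b \<in> Bset nu)"
  then obtain a where a: "a > 0" "a \<in> Aset nu" using Anu_pos by blast
  obtain b where b: "b > 0" "b \<in> Bset nu" using h by blast
  have "1/a \<in> Bset g" by (rule L3[OF a(2) a(1)])
  moreover have "1/a > 0" using a(1) by simp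
  ultimately have SQ using Bg_iff by blast
  have "1/b \<in> Aset g" by (rule L4[OF b(2) b(1)])
  hence DB using Ag_iff by blast
  with \<open>SQ\<close> show "DB \<and> SQ" by blast
next
  assume h: "DB \<and> SQ"
  then obtain a where a: "a > 0" "a \<in> Aset g" using Ag_iff Ag_pos by blast
  obtain b where b: "b > 0" "b \<in> Bset g" using h Bg_iff by blast
  have "1/b \<in> Aset nu" by (rule L1[OF b(2) b(1)])
  moreover have "1/a \<in> Bset nu" by (rule L2[OF a(2) a(1)])
  moreover have "1/a > 0" using a(1) by simp
  ultimately show "(\<exists>a. a \<in> Aset nu) \<and> (\<exists>b>0. b \<in> Bset nu)" by blast
qed

lemma SR_EQV: assumes "DB \<and> SQ" shows EQV
proof -
  obtain a where a: "a \<ge> 0" "AIg a" using DB_AIg assms by blast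
  obtain a' where "a' \<in> Aset nu" using nu_iff assms by blast
  thus ?thesis using EQV_intro a by blast
qed

lemma EQV_SR: assumes EQV shows "DB \<and> SQ"
  using EQV_nu_sets[OF assms] nu_iff by blast

lemma om_iff: "((\<exists>a. a \<in> Aset om) \<and> (\<exists>b>0. b \<in> Bset om)) \<longleftrightarrow> DB \<and> SQ"
proof
  assume "(\<exists>a. a \<in> Aset om) \<and> (\<exists>b>0. b \<in> Bset om)"
  thus "DB \<and> SQ" using om_sets_EQV EQV_SR by blast
next
  assume h: "DB \<and> SQ"
  hence e: EQV by (rule SR_EQV)
  show "(\<exists>a. a \<in> Aset om) \<and> (\<exists>b>0. b \<in> Bset om)" using EQV_sets[OF e] nu_iff h by simp
qed

end



context wseq
begin

lemma idx_identities: assumes "DB \<and> SQ"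
  shows "alpha_idx om = 1 / beta_idx g \<and> alpha_idx nu = 1 / beta_idx g \<and>
         beta_idx om = 1 / alpha_idx g \<and> beta_idx nu = 1 / alpha_idx g"
proof -
  have e: EQV using SR_EQV[OF assms] .
  have sets: "Aset om = Aset nu" "Bset om = Bset nu" using EQV_sets[OF e] by auto
  obtain ag where ag: "ag > 0" "ag \<in> Aset g" using Ag_iff Ag_pos assms by blast
  obtain bg where bg: "bg > 0" "bg \<in> Bset g" using Bg_iff assms by blast
  obtain anu where anu: "anu \<in> Aset nu" using nu_iff assms by blast
  obtain bnu where bnu: "bnu > 0" "bnu \<in> Bset nu" using nu_iff assms by blast
  have I1: "Inf (ereal ` Aset nu) = 1 / Sup (ereal ` Bset g) \<and> Sup (ereal ` Bset g) = 1 / Inf (ereal ` Aset nu)"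
  proof (rule inv_index[of "Bset g" "Aset nu" bg "ag"])
    show "\<forall>b\<in>Bset g. b > 0 \<longrightarrow> 1/b \<in> Aset nu" using L1 by blast
    show "\<forall>a\<in>Aset nu. a > 0 \<longrightarrow> 1/a \<in> Bset g" using L3 by blast
    show "bg \<in> Bset g" "bg > 0" using bg by auto
    show "\<forall>a\<in>Aset nu. a > 0"
    proof
      fix a assume "a \<in> Aset nu"
      hence "bnu \<le> a" by (rule Bset_le_Aset[OF nu_eventually_pos _ bnu(2)])
      thus "a > 0" using bnu(1) by simp
    qed
    show "\<forall>b\<in>Bset g. b \<le> ag" using Bset_le_Aset[OF g_eventually_pos ag(2)] by blast
  qed
  have I2: "Inf (ereal ` Aset g) = 1 / Sup (ereal ` Bset nu) \<and> Sup (ereal ` Bset nu) = 1 / Inf (ereal ` Aset g)"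
  proof (rule inv_index[of "Bset nu" "Aset g" bnu anu])
    show "\<forall>b\<in>Bset nu. b > 0 \<longrightarrow> 1/b \<in> Aset g" using L4 by blast
    show "\<forall>a\<in>Aset g. a > 0 \<longrightarrow> 1/a \<in> Bset nu" using L2 by blast
    show "bnu \<in> Bset nu" "bnu > 0" using bnu by auto
    show "\<forall>a\<in>Aset g. a > 0"
    proof
      fix a assume "a \<in> Aset g"
      hence "bg \<le> a" by (rule Bset_le_Aset[OF g_eventually_pos _ bg(2)])
      thus "a > 0" using bg(1) by simp
    qed
    show "\<forall>b\<in>Bset nu. b \<le> anu" using Bset_le_Aset[OF nu_eventually_pos anu] by blast
  qed
  show ?thesis
    unfolding alpha_idx_Aset[OF om_eventually_pos] alpha_idx_Aset[OF nu_eventually_pos]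
      beta_idx_Bset[OF om_eventually_pos] beta_idx_Bset[OF nu_eventually_pos]
      alpha_idx_Aset[OF g_eventually_pos] beta_idx_Bset[OF g_eventually_pos] sets
    using conjunct1[OF I1] conjunct2[OF I2] by blast
qed

lemma v_iff: "(0 < Liminf at_top (\<lambda>t. ereal (nu t / om t)) \<and>
           Liminf at_top (\<lambda>t. ereal (nu t / om t)) \<le> Limsup at_top (\<lambda>t. ereal (nu t / om t)) \<and>
           Limsup at_top (\<lambda>t. ereal (nu t / om t)) < \<infinity>) \<longleftrightarrow> EQV"
  (is "(0 < ?Li \<and> ?Li \<le> ?Ls \<and> ?Ls < \<infinity>) \<longleftrightarrow> _")
proof
  assume h: "0 < ?Li \<and> ?Li \<le> ?Ls \<and> ?Ls < \<infinity>"
  obtain r where r: "0 < ereal r" "ereal r < ?Li" using ereal_dense2 h by blast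
  obtain R where R: "?Ls < ereal R" "ereal R < \<infinity>" using ereal_dense2[of ?Ls \<infinity>] h by blast
  have ev: "eventually (\<lambda>t. ereal r < ereal (nu t / om t) \<and> ereal (nu t / om t) < ereal R \<and> t \<ge> m 0 + 1) at_top"
    by (intro eventually_conj less_LiminfD[OF r(2)] Limsup_lessD[OF R(1)] eventually_ge_at_top)
  then obtain T where T: "\<forall>t\<ge>T. ereal r < ereal (nu t / om t) \<and> ereal (nu t / om t) < ereal R \<and> t \<ge> m 0 + 1"
    unfolding eventually_at_top_linorder by blast
  have "\<forall>t\<ge>T. r * om t \<le> nu t \<and> nu t \<le> max R 1 * om t"
  proof (intro allI impI)
    fix t assume t: "t \<ge> T"
    have op: "om t > 0" using T t om_eventually_pos by auto
    have "r < nu t / om t" "nu t / om t < R" using T t by auto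
    hence "r * om t < nu t" "nu t < R * om t" using op by (simp_all add: field_simps)
    moreover have "R * om t \<le> max R 1 * om t" using op by (intro mult_right_mono) auto
    ultimately show "r * om t \<le> nu t \<and> nu t \<le> max R 1 * om t" by simp
  qed
  moreover have "r > 0" using r by simp
  moreover have "max R 1 > 0" by simp
  ultimately show EQV unfolding EQV_def by blast
next
  assume EQV
  then obtain c C T0 where cC: "c > 0" "C > 0" "\<forall>t\<ge>T0. c * om t \<le> nu t \<and> nu t \<le> C * om t"
    unfolding EQV_def by blast
  have ev: "eventually (\<lambda>t. c \<le> nu t / om t \<and> nu t / om t \<le> C) at_top"
    unfolding eventually_at_top_linorder
  proof (intro exI[of _ "max T0 (m 0 + 1)"] allI impI)
    fix t assume t: "t \<ge> max T0 (m 0 + 1)"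
    have op: "om t > 0" using t om_eventually_pos by auto
    show "c \<le> nu t / om t \<and> nu t / om t \<le> C" using cC(3) t op by (auto simp: field_simps)
  qed
  have "ereal c \<le> ?Li" using ev by (intro Liminf_bounded) (auto elim: eventually_mono)
  moreover have "?Ls \<le> ereal C" using ev by (intro Limsup_bounded) (auto elim: eventually_mono)
  moreover have "?Li \<le> ?Ls" by (intro Liminf_le_Limsup) simp
  moreover have "(0::ereal) < ereal c" using cC by simp
  moreover have "ereal C < \<infinity>" by simp
  ultimately show "0 < ?Li \<and> ?Li \<le> ?Ls \<and> ?Ls < \<infinity>" by (meson order.strict_trans1 order.strict_trans2)
qed

lemma AIg_ratio: assumes "AIg a" "a \<ge> 0"
  shows "\<exists>C>0. \<forall>l p. l > 0 \<longrightarrow> m (nat \<lfloor>l * real p\<rfloor>) / m p \<le> C * (l + 1) powr a"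
proof -
  obtain C where C: "C > 0" "\<forall>k j. k \<le> j \<longrightarrow> m j \<le> C * ((real j+1)/(real k+1)) powr a * m k"
    using assms unfolding AIg_def by blast
  define C' where "C' = max C 1"
  have "m (nat \<lfloor>l * real p\<rfloor>) / m p \<le> C' * (l + 1) powr a" if l: "l > 0" for l p
  proof -
    define j where "j = nat \<lfloor>l * real p\<rfloor>"
    have l1: "(l + 1) powr a \<ge> 1" using l assms(2) by (simp add: ge_one_powr_ge_zero)
    have C'1: "C' \<ge> 1" "C' \<ge> C" unfolding C'_def by auto
    show ?thesis
    proof (cases "j \<le> p")
      case True
      have "m j / m p \<le> 1" using m_mono[OF True] mpos[of p] by simp
      also have "1 \<le> C' * (l + 1) powr a"
      proof -
        have "1 * 1 \<le> C' * (l + 1) powr a" using C'1 l1 by (intro mult_mono) auto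
        thus ?thesis by simp
      qed
      finally show ?thesis unfolding j_def .
    next
      case False
      have lp0: "0 \<le> l * real p" using l by simp
      have jl: "real j \<le> l * real p" unfolding j_def using lp0 by (simp add: of_nat_nat)
      have r: "(real j+1)/(real p+1) \<le> l + 1"
      proof -
        have "real j + 1 \<le> l * real p + 1" using jl by simp
        also have "\<dots> \<le> (l + 1) * (real p + 1)" using l by (simp add: algebra_simps)
        finally show ?thesis by (simp add: divide_le_eq)
      qed
      have "m j \<le> C * ((real j+1)/(real p+1)) powr a * m p" using C(2) False by simp
      also have "\<dots> \<le> C' * (l + 1) powr a * m p"
        using r C'1 C(1) mpos[of p] assms(2) by (intro mult_right_mono mult_mono powr_mono2) auto
      finally show ?thesis unfolding j_def using mpos[of p] by (simp add: divide_le_eq)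
    qed
  qed
  moreover have "C' > 0" unfolding C'_def by simp
  ultimately show ?thesis by blast
qed

lemma Oreg_iff: "O_reg_var m \<longleftrightarrow> DB"
proof
  assume h: "O_reg_var m"
  have "Limsup sequentially (\<lambda>p. ereal (m (nat \<lfloor>3 * real p\<rfloor>) / m p)) < \<infinity>"
    using h unfolding O_reg_var_def by simp
  then obtain R where R: "Limsup sequentially (\<lambda>p. ereal (m (nat \<lfloor>3 * real p\<rfloor>) / m p)) < ereal R"
    using ereal_dense2 by blast
  obtain p0 where p0: "\<forall>p\<ge>p0. ereal (m (nat \<lfloor>3 * real p\<rfloor>) / m p) < ereal R"
    using Limsup_lessD[OF R] unfolding eventually_sequentially by blast
  have "\<forall>p\<ge>max p0 1. m (2*p+1) \<le> R * m p"
  proof (intro allI impI)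
    fix p assume p: "p \<ge> max p0 1"
    have f0: "3 * real p = real (3*p)" by simp
    have f: "nat \<lfloor>3 * real p\<rfloor> = 3 * p" by (simp only: f0 floor_of_nat nat_int)
    have "ereal (m (nat \<lfloor>3 * real p\<rfloor>) / m p) < ereal R" using p0 p by simp
    hence "m (3*p) / m p < R" unfolding f by simp
    hence "m (3*p) \<le> R * m p" using mpos[of p] by (simp add: divide_less_eq)
    moreover have "m (2*p+1) \<le> m (3*p)" using p by (intro m_mono) simp
    ultimately show "m (2*p+1) \<le> R * m p" by simp
  qed
  thus DB by (rule DB_eventual)
next
  assume DB
  then obtain a where a: "a \<ge> 0" "AIg a" using DB_AIg by blast
  obtain C where C: "C > 0" "\<forall>l p. l > 0 \<longrightarrow> m (nat \<lfloor>l * real p\<rfloor>) / m p \<le> C * (l + 1) powr a"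
    using AIg_ratio[OF a(2,1)] by blast
  show "O_reg_var m" unfolding O_reg_var_def
  proof (intro allI impI)
    fix l :: real assume l: "l > 0"
    have "Limsup sequentially (\<lambda>p. ereal (m (nat \<lfloor>l * real p\<rfloor>) / m p)) \<le> ereal (C * (l + 1) powr a)"
      using C l by (intro Limsup_bounded) auto
    also have "\<dots> < \<infinity>" by simp
    finally show "Limsup sequentially (\<lambda>p. ereal (m (nat \<lfloor>l * real p\<rfloor>) / m p)) < \<infinity>" .
  qed
qed

lemma ii_iff: "(\<exists>k::nat. k \<ge> 2 \<and>
              1 < Liminf sequentially (\<lambda>p. ereal (m (k * p) / m p)) \<and>
              Liminf sequentially (\<lambda>p. ereal (m (k * p) / m p))
                \<le> Limsup sequentially (\<lambda>p. ereal (m (k * p) / m p)) \<and>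
              Limsup sequentially (\<lambda>p. ereal (m (k * p) / m p)) < \<infinity>) \<longleftrightarrow> DB \<and> SQ"
proof
  assume "\<exists>k::nat. k \<ge> 2 \<and>
              1 < Liminf sequentially (\<lambda>p. ereal (m (k * p) / m p)) \<and>
              Liminf sequentially (\<lambda>p. ereal (m (k * p) / m p))
                \<le> Limsup sequentially (\<lambda>p. ereal (m (k * p) / m p)) \<and>
              Limsup sequentially (\<lambda>p. ereal (m (k * p) / m p)) < \<infinity>"
  then obtain k :: nat where k: "k \<ge> 2" "1 < Liminf sequentially (\<lambda>p. ereal (m (k * p) / m p))"
    "Limsup sequentially (\<lambda>p. ereal (m (k * p) / m p)) < \<infinity>" by blast
  obtain d where d: "1 < ereal d" "ereal d < Liminf sequentially (\<lambda>p. ereal (m (k * p) / m p))"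
    using ereal_dense2[OF k(2)] by blast
  obtain R where R: "Limsup sequentially (\<lambda>p. ereal (m (k * p) / m p)) < ereal R"
    using ereal_dense2[OF k(3)] by blast
  have "eventually (\<lambda>p. ereal d < ereal (m (k * p) / m p) \<and> ereal (m (k * p) / m p) < ereal R) sequentially"
    by (intro eventually_conj less_LiminfD[OF d(2)] Limsup_lessD[OF R])
  then obtain p0 where p0: "\<forall>p\<ge>p0. ereal d < ereal (m (k * p) / m p) \<and> ereal (m (k * p) / m p) < ereal R"
    unfolding eventually_sequentially by blast
  have d1: "d > 1" using d by simp
  have lo: "m (k*p) \<ge> d * m p" and up: "m (k*p) \<le> R * m p" if "p \<ge> p0" for p
  proof -
    have "d < m (k*p) / m p" "m (k*p) / m p < R" using p0 that by auto
    thus "m (k*p) \<ge> d * m p" "m (k*p) \<le> R * m p" using mpos[of p] by (simp_all add: field_simps)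
  qed
  have kip: "p \<le> k^i * p" for i p
  proof -
    have "k^i \<ge> 1" using k by simp
    thus ?thesis by simp
  qed
  have G: "m (k^i * p) \<ge> d^i * m p" if p: "p \<ge> p0" for i p
  proof (induction i)
    case 0 then show ?case by simp
  next
    case (Suc i)
    have "k^i * p \<ge> p0" using p kip[of p i] by linarith
    hence "m (k * (k^i * p)) \<ge> d * m (k^i * p)" by (rule lo)
    moreover have "d * m (k^i * p) \<ge> d * (d^i * m p)" using Suc d1 by (intro mult_left_mono) auto
    ultimately show ?case by (simp add: mult.assoc)
  qed
  obtain n where n: "2 < d ^ n" using real_arch_pow[OF d1] by blast
  have n1: "n \<ge> 1" using n by (cases n) auto
  have "k^1 \<le> k^n" by (rule power_increasing[OF n1]) (use k in simp)
  hence "k^n \<ge> 2" using k by simp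
  moreover have "\<forall>p\<ge>p0. m (k^n * p) \<ge> 2 * m p"
  proof (intro allI impI)
    fix p assume p: "p \<ge> p0"
    have "2 * m p \<le> d^n * m p" using n mpos[of p] by simp
    also have "\<dots> \<le> m (k^n * p)" using G[OF p] .
    finally show "m (k^n * p) \<ge> 2 * m p" .
  qed
  ultimately have SQ unfolding SQ_def by blast
  have "\<forall>p\<ge>max p0 1. m (2*p+1) \<le> (R*R) * m p"
  proof (intro allI impI)
    fix p assume p: "p \<ge> max p0 1"
    have "0 < R * m p0" using up[of p0] mpos[of "k*p0"] by simp
    hence R0: "R > 0" using mpos[of p0] by (simp add: zero_less_mult_iff)
    have "2*(2*p) \<le> k*(2*p)" using k by (intro mult_le_mono1)
    hence "2*p+1 \<le> k*(2*p)" using p by linarith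
    hence "m (2*p+1) \<le> m (k*(2*p))" by (rule m_mono)
    also have "\<dots> \<le> R * m (2*p)" using up p by simp
    also have "m (2*p) \<le> m (k*p)" using k by (intro m_mono) simp
    hence "R * m (2*p) \<le> R * m (k*p)" using R0 by simp
    also have "m (k*p) \<le> R * m p" using up p by simp
    hence "R * m (k*p) \<le> R * (R * m p)" using R0 by simp
    finally show "m (2*p+1) \<le> (R*R) * m p" by (simp add: mult.assoc)
  qed
  hence DB by (rule DB_eventual)
  with \<open>SQ\<close> show "DB \<and> SQ" by blast
next
  assume h: "DB \<and> SQ"
  obtain k :: nat and p0 where k: "k \<ge> 2" "\<forall>p\<ge>p0. m (k*p) \<ge> 2 * m p" using h unfolding SQ_def by blast
  obtain a where a: "a \<ge> 0" "AIg a" using DB_AIg h by blast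
  obtain C where C: "C > 0" "\<forall>l p. l > 0 \<longrightarrow> m (nat \<lfloor>l * real p\<rfloor>) / m p \<le> C * (l + 1) powr a"
    using AIg_ratio[OF a(2,1)] by blast
  have fl: "nat \<lfloor>real k * real p\<rfloor> = k * p" for p
  proof -
    have f0: "real k * real p = real (k*p)" by simp
    show ?thesis by (simp only: f0 floor_of_nat nat_int)
  qed
  have up: "m (k*p) / m p \<le> C * (real k + 1) powr a" for p
    using C(2)[rule_format, of "real k" p] k fl[of p] by simp
  let ?Li = "Liminf sequentially (\<lambda>p. ereal (m (k * p) / m p))"
  let ?Ls = "Limsup sequentially (\<lambda>p. ereal (m (k * p) / m p))"
  have "ereal 2 \<le> ?Li"
  proof (intro Liminf_bounded)
    show "\<forall>\<^sub>F p in sequentially. ereal 2 \<le> ereal (m (k * p) / m p)"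
      unfolding eventually_sequentially using k(2) mpos by (auto simp: field_simps)
  qed
  moreover have "?Ls \<le> ereal (C * (real k + 1) powr a)" using up by (intro Limsup_bounded) auto
  moreover have "?Li \<le> ?Ls" by (intro Liminf_le_Limsup) simp
  moreover have "(1::ereal) < ereal 2" by simp
  moreover have "ereal (C * (real k + 1) powr a) < \<infinity>" by simp
  ultimately have "k \<ge> 2 \<and> 1 < ?Li \<and> ?Li \<le> ?Ls \<and> ?Ls < \<infinity>" using k(1)
    by (meson order.strict_trans1 order.strict_trans2)
  thus "\<exists>k::nat. k \<ge> 2 \<and>
              1 < Liminf sequentially (\<lambda>p. ereal (m (k * p) / m p)) \<and>
              Liminf sequentially (\<lambda>p. ereal (m (k * p) / m p))
                \<le> Limsup sequentially (\<lambda>p. ereal (m (k * p) / m p)) \<and>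
              Limsup sequentially (\<lambda>p. ereal (m (k * p) / m p)) < \<infinity>" by blast
qed

end

theorem corollary4p12:
  fixes M :: "nat \<Rightarrow> real"
  assumes "weight_seq M"
  defines "m \<equiv> quot M"
  shows "(strongly_regular M \<longleftrightarrow>
           (\<exists>k::nat. k \<ge> 2 \<and>
              1 < Liminf sequentially (\<lambda>p. ereal (m (k * p) / m p)) \<and>
              Liminf sequentially (\<lambda>p. ereal (m (k * p) / m p))
                \<le> Limsup sequentially (\<lambda>p. ereal (m (k * p) / m p)) \<and>
              Limsup sequentially (\<lambda>p. ereal (m (k * p) / m p)) < \<infinity>))
       \<and> (strongly_regular M \<longleftrightarrow>
           alpha_idx (seq_step m) < \<infinity> \<and> beta_idx (seq_step m) > 0)
       \<and> (strongly_regular M \<longleftrightarrow> O_reg_var m \<and> beta_idx (seq_step m) > 0)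
       \<and> (strongly_regular M \<longleftrightarrow>
           0 < Liminf at_top (\<lambda>t. ereal (nu_m m t / omegaM M t)) \<and>
           Liminf at_top (\<lambda>t. ereal (nu_m m t / omegaM M t))
             \<le> Limsup at_top (\<lambda>t. ereal (nu_m m t / omegaM M t)) \<and>
           Limsup at_top (\<lambda>t. ereal (nu_m m t / omegaM M t)) < \<infinity>)
       \<and> (strongly_regular M \<longleftrightarrow>
           alpha_idx (nu_m m) < \<infinity> \<and> beta_idx (nu_m m) > 0)
       \<and> (strongly_regular M \<longleftrightarrow>
           alpha_idx (omegaM M) < \<infinity> \<and> beta_idx (omegaM M) > 0)
       \<and> (strongly_regular M \<longrightarrow>
           alpha_idx (omegaM M) = 1 / beta_idx (seq_step m) \<and>
           alpha_idx (nu_m m) = 1 / beta_idx (seq_step m) \<and>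
           beta_idx (omegaM M) = 1 / alpha_idx (seq_step m) \<and>
           beta_idx (nu_m m) = 1 / alpha_idx (seq_step m))"
proof -
  interpret wseq M by unfold_locales (rule assms(1))
  have SR: "strongly_regular M \<longleftrightarrow> DB \<and> SQ" by (rule SR_iff)
  have iii: "(alpha_idx g < \<infinity> \<and> beta_idx g > 0) \<longleftrightarrow> DB \<and> SQ"
    using alpha_fin_iff[OF g_eventually_pos] beta_pos_iff[OF g_eventually_pos] Ag_iff Bg_iff by blast
  have iv: "(O_reg_var (quot M) \<and> beta_idx g > 0) \<longleftrightarrow> DB \<and> SQ"
    using Oreg_iff beta_pos_iff[OF g_eventually_pos] Bg_iff by blast
  have vi: "(alpha_idx nu < \<infinity> \<and> beta_idx nu > 0) \<longleftrightarrow> DB \<and> SQ"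
    using alpha_fin_iff[OF nu_eventually_pos] beta_pos_iff[OF nu_eventually_pos] nu_iff by blast
  have vii: "(alpha_idx om < \<infinity> \<and> beta_idx om > 0) \<longleftrightarrow> DB \<and> SQ"
    using alpha_fin_iff[OF om_eventually_pos] beta_pos_iff[OF om_eventually_pos] om_iff by blast
  have v: "(0 < Liminf at_top (\<lambda>t. ereal (nu t / om t)) \<and>
           Liminf at_top (\<lambda>t. ereal (nu t / om t)) \<le> Limsup at_top (\<lambda>t. ereal (nu t / om t)) \<and>
           Limsup at_top (\<lambda>t. ereal (nu t / om t)) < \<infinity>) \<longleftrightarrow> DB \<and> SQ"
    using v_iff SR_EQV EQV_SR by blast
  have ids: "strongly_regular M \<longrightarrow>
           alpha_idx om = 1 / beta_idx g \<and> alpha_idx nu = 1 / beta_idx g \<and>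
           beta_idx om = 1 / alpha_idx g \<and> beta_idx nu = 1 / alpha_idx g"
    using idx_identities SR by blast
  show ?thesis unfolding m_def using SR ii_iff iii iv v vi vii ids by blast
qed

end
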